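(* Let $Y\in\mathbb{C}^{(n\times n)\cdot d}$, let $f$ be an NC function uniformly analytic in a uniformly open neighbourhood of $Y$, and let $f_\ell$, $f_\omega$ and the coefficients $\hat f_{\alpha,\beta;\omega}$ be as in the context. Then there is a constant $C>0$ such that for all $\ell\in\mathbb{N}$, $$\Big(\sum_{\substack{\alpha,\beta\in\mathbb{F}^+_n,\ \omega\in\mathbb{F}^+_d\\ |\alpha|=|\beta|=\ell+1=|\omega|+1}}|\hat f_{\alpha,\beta;\omega}|^2\Big)^{1/(2\ell)}\le C\,\|f_\ell\|_{\mathrm{CB}}^{1/\ell}.$$
   Context: $\mathbb{C}^{(k\times k)\cdot d}$ denotes column $d$-tuples of $k\times k$ matrices, with $\|X\|_{\mathrm{col}}$ the operator norm of the stacked $kd\times k$ matrix; the uniform topology is generated by the sets $\bigsqcup_m\{X\in\mathbb{C}^{(mk\times mk)\cdot d}:\|X-I_m\otimes Z\|_{\mathrm{col}}<r\}$. An NC function on a set $\Omega\subseteq\bigsqcup_k\mathbb{C}^{(k\times k)\cdot d}$ closed under direct sums is a map $f$ with $f(X)\in\mathbb{C}^{k\times k}$ at level $k$, $f(X\oplus X')=f(X)\oplus f(X')$, and $f(S^{-1}XS)=S^{-1}f(X)S$ whenever $X,S^{-1}XS\in\Omega$; it is uniformly analytic if $\Omega$ is uniformly open and $f$ is locally bounded in the uniform topology. $\mathbb{F}^+_k$ is the free monoid of words in $\{1,\dots,k\}$. Such $f$ has a Taylor–Taylor expansion at $Y$: there are unique $|\omega|$-linear maps $f_\omega:(\mathbb{C}^{n\times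 n})^{|\omega|}\to\mathbb{C}^{n\times n}$ ($\omega\in\mathbb{F}^+_d$) with $f(X)=\sum_\omega f_\omega\circ(X-I_m\otimes Y)^{\odot\omega}$ for $X$ near $Y$, where for $\omega=w_1\cdots w_\ell$, $f_\omega\circ(H_{w_1}\odot\cdots\odot H_{w_\ell})$ means the $m\times m$ block matrix obtained by applying $f_\omega$ to the Haagerup product of the $m\times m$ block matrices $H_{w_i}$ over $\mathbb{C}^{n\times n}$. Let $f_\ell$ be the $\ell$-linear map on $(\mathbb{C}^{(n\times n)\cdot d})^\ell$, $f_\ell(H^{(1)},\dots,H^{(\ell)})=\sum_{|\omega|=\ell}f_\omega(H^{(1)}_{w_1},\dots,H^{(\ell)}_{w_\ell})$, and $\|f_\ell\|_{\mathrm{CB}}$ its completely bounded norm (in the sense of Christensen–Sinclair), i.e. the cb-norm of its linearization on the $\ell$-fold Haagerup tensor product $E\otimes_h\cdots\otimes_hE$, where $E=\mathbb{C}^{(n\times n)\cdot d}$ carries the column operator space structure ($E^{i\times j}$ normed as $\mathbb{C}^{ind\times jn}$). Each $f_\omega$, $|\omega|=\ell$, is written uniquely as $f_\omega(G_1,\dots,G_\ell)=\sum_{\alpha,\beta}\hat f_{\alpha,\beta;\omega}E_{a_0,b_0}G_1E_{a_1,b_1}\cdots G_\ell E_{a_\ell,b_\ell}$, the sum over words $\alpha=a_0\cdots a_\ell,\beta=b_0\cdots b_\ell\in\mathbb{F}^+_n$, with $E_{i,j}$ the matrix units of $\mathbb{C}^{n\times n}$ and $\hat f_{\alpha,\beta;\omega}\in\mathbb{C}$.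 *)

theory Defs
  imports Complex_Main "Jordan_Normal_Form.Matrix"
begin

text \<open>Points of the NC space are pairs (level k, tuple).\<close>

definition is_tup :: "nat \<Rightarrow> nat \<Rightarrow> complex mat list \<Rightarrow> bool" where
  "is_tup d k X \<longleftrightarrow> length X = d \<and> (\<forall>A\<in>set X. A \<in> carrier_mat k k)"

definition NCspace :: "nat \<Rightarrow> (nat \<times> complex mat list) set" where
  "NCspace d = {(k, X). k \<ge> 1 \<and> is_tup d k X}"

definition words :: "nat \<Rightarrow> nat \<Rightarrow> nat list set" where
  "words a l = {w. length w = l \<and> set w \<subseteq> {..<a}}"

definition vnorm :: "complex vec \<Rightarrow> real" where
  "vnorm v = sqrt (\<Sum>i<dim_vec v. (cmod (v $ i))\<^sup>2)"

definition opnorm :: "complex mat \<Rightarrow> real" where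
  "opnorm A = Sup {vnorm (A *\<^sub>v v) | v. v \<in> carrier_vec (dim_col A) \<and> vnorm v \<le> 1}"

text \<open>column stacking of a d-tuple of k x k matrices into a (d k) x k matrix\<close>
definition colstack :: "nat \<Rightarrow> complex mat list \<Rightarrow> complex mat" where
  "colstack k X = mat (length X * k) k (\<lambda>(i, j). (X ! (i div k)) $$ (i mod k, j))"

definition colnorm :: "nat \<Rightarrow> complex mat list \<Rightarrow> real" where
  "colnorm k X = opnorm (colstack k X)"

text \<open>I_m \<otimes> Z for a square matrix Z\<close>
definition ampl :: "nat \<Rightarrow> complex mat \<Rightarrow> complex mat" where
  "ampl m Z = mat (m * dim_row Z) (m * dim_row Z)
     (\<lambda>(i, j). if i div dim_row Z = j div dim_row Z
               then Z $$ (i mod dim_row Z, j mod dim_row Z) else 0)"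

definition tup_sub :: "complex mat list \<Rightarrow> complex mat list \<Rightarrow> complex mat list" where
  "tup_sub X Z = map2 (\<lambda>A B. A - B) X Z"

definition ubasic :: "nat \<Rightarrow> nat \<Rightarrow> complex mat list \<Rightarrow> real \<Rightarrow> (nat \<times> complex mat list) set" where
  "ubasic d k Z r = {(s, X). (s, X) \<in> NCspace d \<and>
      (\<exists>m\<ge>1. s = m * k \<and> colnorm s (tup_sub X (map (ampl m) Z)) < r)}"

definition ubasics :: "nat \<Rightarrow> (nat \<times> complex mat list) set set" where
  "ubasics d = {ubasic d k Z r | k Z r. (k, Z) \<in> NCspace d \<and> r > 0}"

definition uniformly_open :: "nat \<Rightarrow> (nat \<times> complex mat list) set \<Rightarrow> bool" where
  "uniformly_open d \<Omega> \<longleftrightarrow> \<Omega> \<subseteq> NCspace d \<and> generate_topology (ubasics d) \<Omega>"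

definition dsum :: "complex mat \<Rightarrow> complex mat \<Rightarrow> complex mat" where
  "dsum A B = four_block_mat A (0\<^sub>m (dim_row A) (dim_col B)) (0\<^sub>m (dim_row B) (dim_col A)) B"

definition dsum_closed :: "(nat \<times> complex mat list) set \<Rightarrow> bool" where
  "dsum_closed \<Omega> \<longleftrightarrow> (\<forall>k X k' X'. (k, X) \<in> \<Omega> \<and> (k', X') \<in> \<Omega> \<longrightarrow>
      (k + k', map2 dsum X X') \<in> \<Omega>)"

definition nc_function :: "nat \<Rightarrow> (nat \<times> complex mat list) set \<Rightarrow>
    (nat \<Rightarrow> complex mat list \<Rightarrow> complex mat) \<Rightarrow> bool" where
  "nc_function d \<Omega> f \<longleftrightarrow> \<Omega> \<subseteq> NCspace d \<and> dsum_closed \<Omega> \<and>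
     (\<forall>(k, X)\<in>\<Omega>. f k X \<in> carrier_mat k k) \<and>
     (\<forall>k X k' X'. (k, X) \<in> \<Omega> \<and> (k', X') \<in> \<Omega> \<longrightarrow>
        f (k + k') (map2 dsum X X') = dsum (f k X) (f k' X')) \<and>
     (\<forall>k X S T. (k, X) \<in> \<Omega> \<and> S \<in> carrier_mat k k \<and> T \<in> carrier_mat k k \<and>
        S * T = 1\<^sub>m k \<and> T * S = 1\<^sub>m k \<and> (k, map (\<lambda>A. T * A * S) X) \<in> \<Omega> \<longrightarrow>
        f k (map (\<lambda>A. T * A * S) X) = T * f k X * S)"

definition uniformly_analytic :: "nat \<Rightarrow> (nat \<times> complex mat list) set \<Rightarrow>
    (nat \<Rightarrow> complex mat list \<Rightarrow> complex mat) \<Rightarrow> bool" where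
  "uniformly_analytic d \<Omega> f \<longleftrightarrow> nc_function d \<Omega> f \<and> uniformly_open d \<Omega> \<and>
     (\<forall>p\<in>\<Omega>. \<exists>U. uniformly_open d U \<and> p \<in> U \<and> U \<subseteq> \<Omega> \<and>
        (\<exists>B. \<forall>(k, X)\<in>U. opnorm (f k X) \<le> B))"

definition blk :: "nat \<Rightarrow> complex mat \<Rightarrow> nat \<Rightarrow> nat \<Rightarrow> complex mat" where
  "blk n A p q = mat n n (\<lambda>(r, c). A $$ (p * n + r, q * n + c))"

definition paths :: "nat \<Rightarrow> nat \<Rightarrow> nat \<Rightarrow> nat \<Rightarrow> nat list set" where
  "paths m l a b = {ks. length ks = Suc l \<and> set ks \<subseteq> {..<m} \<and> ks ! 0 = a \<and> ks ! l = b}"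

text \<open>Haagerup-product amplification: phi applied to H_1 \<odot> ... \<odot> H_l, where the
  H_t are m x m block matrices over C^{n x n} (i.e. (m n) x (m n) matrices) and
  phi is an l-linear map on n x n matrices.  For l = 0 this gives I_m \<otimes> phi().\<close>
definition hamp :: "nat \<Rightarrow> nat \<Rightarrow> (complex mat list \<Rightarrow> complex mat) \<Rightarrow> complex mat list \<Rightarrow> complex mat" where
  "hamp n m \<phi> Hs = mat (m * n) (m * n) (\<lambda>(i, j).
     \<Sum>ks\<in>paths m (length Hs) (i div n) (j div n).
        \<phi> (map (\<lambda>t. blk n (Hs ! t) (ks ! t) (ks ! Suc t)) [0..<length Hs]) $$ (i mod n, j mod n))"

definition taylor_taylor :: "nat \<Rightarrow> nat \<Rightarrow> complex mat list \<Rightarrow> (nat \<times> complex mat list) set \<Rightarrow>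
    (nat \<Rightarrow> complex mat list \<Rightarrow> complex mat) \<Rightarrow> (nat list \<Rightarrow> complex mat list \<Rightarrow> complex mat) \<Rightarrow> bool" where
  "taylor_taylor d n Y \<Omega> f fw \<longleftrightarrow> (\<exists>r>0. ubasic d n Y r \<subseteq> \<Omega> \<and>
     (\<forall>m X. m \<ge> 1 \<and> (m * n, X) \<in> ubasic d n Y r \<longrightarrow>
        (\<forall>i j. i < m * n \<and> j < m * n \<longrightarrow>
           (\<lambda>l. \<Sum>\<omega>\<in>words d l.
               hamp n m (fw \<omega>) (map (\<lambda>w. tup_sub X (map (ampl m) Y) ! w) \<omega>) $$ (i, j))
           sums (f (m * n) X $$ (i, j)))))"

definition Eunit :: "nat \<Rightarrow> nat \<Rightarrow> nat \<Rightarrow> complex mat" where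
  "Eunit n i j = mat n n (\<lambda>(r, c). if r = i \<and> c = j then 1 else 0)"

fun mprod :: "nat \<Rightarrow> complex mat list \<Rightarrow> complex mat" where
  "mprod n [] = 1\<^sub>m n"
| "mprod n (A # As) = A * mprod n As"

definition emono :: "nat \<Rightarrow> nat list \<Rightarrow> nat list \<Rightarrow> complex mat list \<Rightarrow> complex mat" where
  "emono n \<alpha> \<beta> G = mprod n (Eunit n (\<alpha> ! 0) (\<beta> ! 0) #
     concat (map (\<lambda>t. [G ! t, Eunit n (\<alpha> ! Suc t) (\<beta> ! Suc t)]) [0..<length G]))"

definition coeff_rep :: "nat \<Rightarrow> nat \<Rightarrow> (nat list \<Rightarrow> complex mat list \<Rightarrow> complex mat) \<Rightarrow>
    (nat list \<Rightarrow> nat list \<Rightarrow> nat list \<Rightarrow> complex) \<Rightarrow> bool" where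
  "coeff_rep d n fw hf \<longleftrightarrow> (\<forall>l. \<forall>\<omega>\<in>words d l. \<forall>G.
     length G = l \<and> (\<forall>A\<in>set G. A \<in> carrier_mat n n) \<longrightarrow>
       fw \<omega> G \<in> carrier_mat n n \<and>
       (\<forall>i<n. \<forall>j<n. fw \<omega> G $$ (i, j) =
          (\<Sum>\<alpha>\<in>words n (Suc l). \<Sum>\<beta>\<in>words n (Suc l). hf \<alpha> \<beta> \<omega> * emono n \<alpha> \<beta> G $$ (i, j))))"

definition fl_amp :: "nat \<Rightarrow> nat \<Rightarrow> (nat list \<Rightarrow> complex mat list \<Rightarrow> complex mat) \<Rightarrow>
    nat \<Rightarrow> complex mat list list \<Rightarrow> complex mat" where
  "fl_amp d n fw p Xs = mat (p * n) (p * n) (\<lambda>(i, j).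
     \<Sum>\<omega>\<in>words d (length Xs).
        hamp n p (fw \<omega>) (map (\<lambda>t. Xs ! t ! (\<omega> ! t)) [0..<length Xs]) $$ (i, j))"

text \<open>Christensen-Sinclair completely bounded norm of f_l, E with column structure\<close>
definition cbnorm :: "nat \<Rightarrow> nat \<Rightarrow> (nat list \<Rightarrow> complex mat list \<Rightarrow> complex mat) \<Rightarrow> nat \<Rightarrow> real" where
  "cbnorm d n fw l = Sup {opnorm (fl_amp d n fw p Xs) | p Xs. p \<ge> 1 \<and> length Xs = l \<and>
      (\<forall>X\<in>set Xs. is_tup d (p * n) X \<and> colnorm (p * n) X \<le> 1)}"

end

theory Submission
  imports Defs "HOL-Analysis.L2_Norm"
begin


lemma vnorm_L2: "vnorm v = L2_set (\<lambda>i. cmod (v $ i)) {..<dim_vec v}"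
  unfolding vnorm_def L2_set_def by simp

lemma vnorm_nonneg: "0 \<le> vnorm v"
  unfolding vnorm_def by (simp add: sum_nonneg)

lemma abs_le_vnorm: "i < dim_vec v \<Longrightarrow> cmod (v $ i) \<le> vnorm v"
  unfolding vnorm_L2 by (rule member_le_L2_set) auto

lemma vnorm_le_sum: "vnorm v \<le> (\<Sum>i<dim_vec v. cmod (v $ i))"
  unfolding vnorm_L2 by (rule L2_set_le_sum) auto

lemma vnorm_smult: "vnorm (c \<cdot>\<^sub>v v) = cmod c * vnorm v"
  unfolding vnorm_L2 by (simp add: L2_set_right_distrib) (rule L2_set_cong, auto simp: norm_mult)

lemma cmod_scalar_le:
  assumes "dim_vec v = k" "vnorm v \<le> 1"
  shows "cmod (w \<bullet> v) \<le> (\<Sum>j<k. cmod (w $ j))"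
proof -
  have "cmod (w \<bullet> v) = cmod (\<Sum>j<k. w $ j * v $ j)"
    unfolding scalar_prod_def using assms by (simp add: lessThan_atLeast0)
  also have "\<dots> \<le> (\<Sum>j<k. cmod (w $ j) * cmod (v $ j))"
    by (rule order_trans[OF norm_sum]) (simp add: norm_mult)
  also have "\<dots> \<le> (\<Sum>j<k. cmod (w $ j))"
  proof (rule sum_mono)
    fix j assume "j \<in> {..<k}"
    then have "cmod (v $ j) \<le> 1" using abs_le_vnorm[of j v] assms by auto
    then show "cmod (w $ j) * cmod (v $ j) \<le> cmod (w $ j)"
      by (simp add: mult_left_le)
  qed
  finally show ?thesis .
qed

lemma opbound:
  assumes "v \<in> carrier_vec (dim_col A)" "vnorm v \<le> 1"
  shows "vnorm (A *\<^sub>v v) \<le> (\<Sum>i<dim_row A. \<Sum>j<dim_col A. cmod (A $$ (i,j)))"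
proof -
  have "vnorm (A *\<^sub>v v) \<le> (\<Sum>i<dim_row A. cmod ((A *\<^sub>v v) $ i))"
    using vnorm_le_sum[of "A *\<^sub>v v"] by simp
  also have "\<dots> \<le> (\<Sum>i<dim_row A. \<Sum>j<dim_col A. cmod (A $$ (i,j)))"
  proof (rule sum_mono)
    fix i assume i: "i \<in> {..<dim_row A}"
    have "cmod ((A *\<^sub>v v) $ i) = cmod (row A i \<bullet> v)" using i by simp
    also have "\<dots> \<le> (\<Sum>j<dim_col A. cmod (row A i $ j))"
      by (rule cmod_scalar_le) (use assms in auto)
    also have "\<dots> = (\<Sum>j<dim_col A. cmod (A $$ (i,j)))"
      using i by (intro sum.cong) auto
    finally show "cmod ((A *\<^sub>v v) $ i) \<le> (\<Sum>j<dim_col A. cmod (A $$ (i,j)))" .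
  qed
  finally show ?thesis .
qed

definition opset :: "complex mat \<Rightarrow> real set" where
  "opset A = {vnorm (A *\<^sub>v v) | v. v \<in> carrier_vec (dim_col A) \<and> vnorm v \<le> 1}"

lemma opnorm_opset: "opnorm A = Sup (opset A)"
  unfolding opnorm_def opset_def ..

lemma opset_bdd: "bdd_above (opset A)"
  unfolding opset_def bdd_above_def using opbound by blast

lemma opset_ne: "vnorm (A *\<^sub>v 0\<^sub>v (dim_col A)) \<in> opset A"
  unfolding opset_def by (intro CollectI exI[of _ "0\<^sub>v (dim_col A)"]) (simp add: vnorm_def)

lemma vnorm_le_opnorm:
  "v \<in> carrier_vec (dim_col A) \<Longrightarrow> vnorm v \<le> 1 \<Longrightarrow> vnorm (A *\<^sub>v v) \<le> opnorm A"
  unfolding opnorm_opset by (rule cSup_upper[OF _ opset_bdd]) (auto simp: opset_def)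

lemma opnorm_nonneg: "0 \<le> opnorm A"
  unfolding opnorm_opset
  by (rule order_trans[OF vnorm_nonneg cSup_upper[OF opset_ne opset_bdd]])

lemma opnorm_le:
  assumes "\<And>v. v \<in> carrier_vec (dim_col A) \<Longrightarrow> vnorm v \<le> 1 \<Longrightarrow> vnorm (A *\<^sub>v v) \<le> K"
  shows "opnorm A \<le> K"
  unfolding opnorm_opset
  by (rule cSup_least) (use opset_ne assms in \<open>auto simp: opset_def\<close>)

lemma vnorm_zero_entries: "vnorm v = 0 \<Longrightarrow> i < dim_vec v \<Longrightarrow> v $ i = 0"
  using abs_le_vnorm[of i v] by simp

lemma vnorm_mult_opnorm:
  assumes v: "v \<in> carrier_vec (dim_col A)"
  shows "vnorm (A *\<^sub>v v) \<le> opnorm A * vnorm v"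
proof (cases "vnorm v = 0")
  case True
  have "A *\<^sub>v v = 0\<^sub>v (dim_row A)"
  proof (rule eq_vecI)
    fix i assume i: "i < dim_vec (0\<^sub>v (dim_row A))"
    have "row A i \<bullet> v = 0" unfolding scalar_prod_def
      using vnorm_zero_entries[OF True] by (intro sum.neutral) auto
    then show "(A *\<^sub>v v) $ i = 0\<^sub>v (dim_row A) $ i" using i by simp
  qed simp
  then show ?thesis using True by (simp add: vnorm_def)
next
  case False
  then have pos: "vnorm v > 0" using vnorm_nonneg[of v] by linarith
  define u where "u = complex_of_real (1 / vnorm v) \<cdot>\<^sub>v v"
  have u1: "vnorm u = 1" unfolding u_def vnorm_smult using pos by (simp add: norm_divide)
  have uc: "u \<in> carrier_vec (dim_col A)" using v unfolding u_def by simp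
  have "A *\<^sub>v u = complex_of_real (1 / vnorm v) \<cdot>\<^sub>v (A *\<^sub>v v)"
    unfolding u_def by (rule mult_mat_vec[OF _ v]) (rule carrier_matI[of _ "dim_row A"], auto)
  then have "vnorm (A *\<^sub>v u) = vnorm (A *\<^sub>v v) / vnorm v"
    using pos by (simp add: vnorm_smult norm_divide)
  moreover have "vnorm (A *\<^sub>v u) \<le> opnorm A" using vnorm_le_opnorm[OF uc] u1 by simp
  ultimately show ?thesis using pos by (simp add: divide_le_eq mult.commute)
qed

lemma entry_le_opnorm:
  assumes "i < dim_row A" "j < dim_col A"
  shows "cmod (A $$ (i,j)) \<le> opnorm A"
proof -
  have e: "vnorm (unit_vec (dim_col A) j :: complex vec) = 1"
  proof -
    have "(\<Sum>k<dim_col A. (cmod ((unit_vec (dim_col A) j :: complex vec) $ k))\<^sup>2) =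
      (\<Sum>k<dim_col A. if k = j then 1 else 0)"
      by (intro sum.cong) (auto simp: unit_vec_def)
    also have "\<dots> = 1" using assms by simp
    finally show ?thesis unfolding vnorm_def by simp
  qed
  have "(A *\<^sub>v unit_vec (dim_col A) j) $ i = A $$ (i,j)"
    using assms by simp
  then have "cmod (A $$ (i,j)) \<le> vnorm (A *\<^sub>v unit_vec (dim_col A) j)"
    using abs_le_vnorm[of i "A *\<^sub>v unit_vec (dim_col A) j"] assms by simp
  also have "\<dots> \<le> opnorm A" by (rule vnorm_le_opnorm) (use e in auto)
  finally show ?thesis .
qed



lemma sum_split_blocks:
  fixes p n :: nat and g :: "nat \<Rightarrow> 'a::comm_monoid_add"
  shows "(\<Sum>z<p*n. g z) = (\<Sum>u<p. \<Sum>z<n. g (u*n + z))"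
proof -
  have "(\<Sum>z<p*n. g z) = (\<Sum>u<p. sum g {u*n..<u*n+n})"
    using sum.nat_group[where g=g and k=n and n=p] by simp
  also have "\<dots> = (\<Sum>u<p. \<Sum>z<n. g (u*n + z))"
  proof (rule sum.cong[OF refl])
    fix u
    have "sum g {0 + u*n..<n + u*n} = (\<Sum>z=0..<n. g (z + u*n))"
      by (rule sum.shift_bounds_nat_ivl)
    then show "sum g {u*n..<u*n+n} = (\<Sum>z<n. g (u*n + z))"
      by (simp add: add.commute lessThan_atLeast0)
  qed
  finally show ?thesis .
qed

definition Amp :: "nat \<Rightarrow> nat \<Rightarrow> nat \<Rightarrow> nat \<Rightarrow> complex mat" where
  "Amp n p a b = mat (p*n) (p*n) (\<lambda>(i,j). if i div n = j div n \<and> i mod n = a \<and> j mod n = b then 1 else 0)"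

fun Pm :: "nat \<Rightarrow> nat \<Rightarrow> nat list \<Rightarrow> nat list \<Rightarrow> complex mat list \<Rightarrow> complex mat" where
  "Pm n p \<alpha> \<beta> [] = Amp n p (\<alpha>!0) (\<beta>!0)"
| "Pm n p \<alpha> \<beta> (H#Hs) = Amp n p (\<alpha>!0) (\<beta>!0) * (H * Pm n p (tl \<alpha>) (tl \<beta>) Hs)"

definition blks :: "nat \<Rightarrow> complex mat list \<Rightarrow> nat list \<Rightarrow> complex mat list" where
  "blks n Hs ks = map (\<lambda>t. blk n (Hs!t) (ks!t) (ks!Suc t)) [0..<length Hs]"

lemma blks_Cons: "blks n (H#Hs) (q#ks) = blk n H q (ks!0) # blks n Hs ks"
  unfolding blks_def by (simp add: upt_conv_Cons map_Suc_upt[symmetric] del: upt_Suc)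

lemma length_blks[simp]: "length (blks n Hs ks) = length Hs"
  unfolding blks_def by simp

lemma Amp_carrier[simp]: "Amp n p a b \<in> carrier_mat (p*n) (p*n)"
  unfolding Amp_def by simp

lemma Pm_carrier:
  "\<forall>H\<in>set Hs. H \<in> carrier_mat (p*n) (p*n) \<Longrightarrow> Pm n p \<alpha> \<beta> Hs \<in> carrier_mat (p*n) (p*n)"
proof (induction Hs arbitrary: \<alpha> \<beta>)
  case (Cons H Hs)
  then have "Pm n p (tl \<alpha>) (tl \<beta>) Hs \<in> carrier_mat (p*n) (p*n)" "H \<in> carrier_mat (p*n) (p*n)" by auto
  then show ?case by (simp add: mult_carrier_mat[OF Amp_carrier mult_carrier_mat])
qed simp

lemma Eunit_carrier[simp]: "Eunit n a b \<in> carrier_mat n n"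
  unfolding Eunit_def by simp

lemma emono_Nil: "emono n \<alpha> \<beta> [] = Eunit n (\<alpha>!0) (\<beta>!0)"
  unfolding emono_def by (simp add: right_mult_one_mat[OF Eunit_carrier])

lemma emono_Cons:
  assumes "\<alpha> \<noteq> []" "\<beta> \<noteq> []"
  shows "emono n \<alpha> \<beta> (G#Gs) = Eunit n (\<alpha>!0) (\<beta>!0) * (G * emono n (tl \<alpha>) (tl \<beta>) Gs)"
proof -
  obtain a \<alpha>' where a: "\<alpha> = a # \<alpha>'" using assms(1) by (cases \<alpha>) auto
  obtain b \<beta>' where b: "\<beta> = b # \<beta>'" using assms(2) by (cases \<beta>) auto
  show ?thesis unfolding emono_def a b
    by (simp add: upt_conv_Cons map_Suc_upt[symmetric] o_def del: upt_Suc)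
qed

lemma mprod_dim_col: "dim_col (mprod n As) = n"
  by (induction As) auto

lemma emono_carrier: "emono n \<alpha> \<beta> Gs \<in> carrier_mat n n"
proof -
  have "dim_row (Eunit n (\<alpha> ! 0) (\<beta> ! 0) * X) = n" "dim_col (Eunit n (\<alpha> ! 0) (\<beta> ! 0) * mprod n As) = n" for X As
    by (simp_all only: index_mult_mat mprod_dim_col) (simp add: Eunit_def)
  then show ?thesis unfolding emono_def mprod.simps carrier_mat_def by blast
qed

lemma mat_mult_entry:
  assumes "A \<in> carrier_mat r k" "B \<in> carrier_mat k c" "i < r" "j < c"
  shows "(A * B) $$ (i,j) = (\<Sum>m<k. A $$ (i,m) * B $$ (m,j))"
  using assms by (simp add: scalar_prod_def lessThan_atLeast0)

lemma Eunit_GR_entry: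
  assumes "G \<in> carrier_mat n n" "R \<in> carrier_mat n n" "x < n" "y < n" "b < n"
  shows "(Eunit n a b * (G * R)) $$ (x,y) = (if x = a then \<Sum>m<n. G $$ (b,m) * R $$ (m,y) else 0)"
proof -
  have GR: "G * R \<in> carrier_mat n n" using assms by simp
  have "(Eunit n a b * (G * R)) $$ (x,y) = (\<Sum>k<n. Eunit n a b $$ (x,k) * (G*R) $$ (k,y))"
    by (rule mat_mult_entry[OF Eunit_carrier GR assms(3,4)])
  also have "\<dots> = (\<Sum>k<n. if k = b then (if x = a then (G*R) $$ (k,y) else 0) else 0)"
    using assms(3) by (intro sum.cong) (auto simp: Eunit_def)
  also have "\<dots> = (if x = a then (G*R) $$ (b,y) else 0)"
    using assms(5) by simp
  also have "\<dots> = (if x = a then \<Sum>m<n. G $$ (b,m) * R $$ (m,y) else 0)"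
    using mat_mult_entry[OF assms(1,2) assms(5,4)] by simp
  finally show ?thesis .
qed

lemma Amp_mult_entry:
  assumes n: "0 < n" and M: "M \<in> carrier_mat (p*n) c" and i: "i < p*n" and j: "j < c" and b: "b < n"
  shows "(Amp n p a b * M) $$ (i,j) = (if i mod n = a then M $$ ((i div n)*n + b, j) else 0)"
proof -
  have iq: "i div n < p" using i by (simp add: less_mult_imp_div_less)
  have "(Amp n p a b * M) $$ (i,j) = (\<Sum>k<p*n. Amp n p a b $$ (i,k) * M $$ (k,j))"
    by (rule mat_mult_entry[OF Amp_carrier M i j])
  also have "\<dots> = (\<Sum>u<p. \<Sum>z<n. Amp n p a b $$ (i,u*n+z) * M $$ (u*n+z,j))"
    by (rule sum_split_blocks)
  also have "\<dots> = (\<Sum>u<p. \<Sum>z<n. if u = i div n \<and> z = b \<and> i mod n = a then M $$ (u*n+z,j) else 0)"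
  proof (rule sum.cong[OF refl], rule sum.cong[OF refl])
    fix u z assume u: "u \<in> {..<p}" and z: "z \<in> {..<n}"
    have "u*n + z < u*n + n" using z by simp
    also have "u*n + n = Suc u * n" by simp
    also have "\<dots> \<le> p * n" using u by (intro mult_le_mono1) simp
    finally have lt: "u*n+z < p*n" .
    have "(u*n+z) div n = u" "(u*n+z) mod n = z" using z n by auto
    then show "Amp n p a b $$ (i,u*n+z) * M $$ (u*n+z,j) = (if u = i div n \<and> z = b \<and> i mod n = a then M $$ (u*n+z,j) else 0)"
      using lt i unfolding Amp_def by auto
  qed
  also have "\<dots> = (\<Sum>u<p. if u = i div n then (if i mod n = a then M $$ ((i div n)*n + b, j) else 0) else 0)"
  proof (rule sum.cong[OF refl])
    fix u assume "u \<in> {..<p}"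
    show "(\<Sum>z<n. if u = i div n \<and> z = b \<and> i mod n = a then M $$ (u*n+z,j) else 0) =
      (if u = i div n then (if i mod n = a then M $$ ((i div n)*n + b, j) else 0) else 0)"
      using b by (cases "u = i div n"; cases "i mod n = a") auto
  qed
  also have "\<dots> = (if i mod n = a then M $$ ((i div n)*n + b, j) else 0)"
    using iq by simp
  finally show ?thesis .
qed

lemma finite_paths: "finite (paths p l q r)"
proof -
  have "paths p l q r \<subseteq> {xs. set xs \<subseteq> {..<p} \<and> length xs = Suc l}"
    unfolding paths_def by auto
  moreover have "finite {xs. set xs \<subseteq> {..<p} \<and> length xs = Suc l}"
    by (rule finite_lists_length_eq) simp
  ultimately show ?thesis by (rule finite_subset)
qed

lemma paths_0: "q < p \<Longrightarrow> paths p 0 q r = (if q = r then {[q]} else {})"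
  unfolding paths_def by (auto simp: length_Suc_conv)

lemma paths_Suc:
  assumes "q < p"
  shows "paths p (Suc l) q r = (Cons q) ` (\<Union>u\<in>{..<p}. paths p l u r)"
proof
  show "paths p (Suc l) q r \<subseteq> (Cons q) ` (\<Union>u\<in>{..<p}. paths p l u r)"
  proof
    fix ks' assume ks': "ks' \<in> paths p (Suc l) q r"
    then obtain k ks where e: "ks' = k # ks" unfolding paths_def by (cases ks') auto
    have "k = q" using ks' e unfolding paths_def by auto
    moreover have "ks \<in> paths p l (ks!0) r" using ks' e unfolding paths_def by auto
    moreover have "ks!0 < p" using ks' e unfolding paths_def by (cases ks) auto
    ultimately show "ks' \<in> (Cons q) ` (\<Union>u\<in>{..<p}. paths p l u r)" using e by blast
  qed
next
  show "(Cons q) ` (\<Union>u\<in>{..<p}. paths p l u r) \<subseteq> paths p (Suc l) q r"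
    using assms unfolding paths_def by auto
qed

lemma sum_paths_Suc:
  assumes "q < p"
  shows "(\<Sum>ks\<in>paths p (Suc l) q r. F ks) = (\<Sum>u<p. \<Sum>ks\<in>paths p l u r. F (q # ks))"
proof -
  have "(\<Sum>ks\<in>paths p (Suc l) q r. F ks) = (\<Sum>ks\<in>(\<Union>u\<in>{..<p}. paths p l u r). F (q # ks))"
    unfolding paths_Suc[OF assms] by (rule sum.reindex[unfolded o_def]) simp
  also have "\<dots> = (\<Sum>u<p. \<Sum>ks\<in>paths p l u r. F (q # ks))"
    by (rule sum.UNION_disjoint) (simp_all add: finite_paths, auto simp: paths_def)
  finally show ?thesis .
qed

lemma blk_entry: "r < n \<Longrightarrow> c < n \<Longrightarrow> blk n H q u $$ (r,c) = H $$ (q*n+r, u*n+c)"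
  unfolding blk_def by simp

lemma blk_carrier[simp]: "blk n H q u \<in> carrier_mat n n"
  unfolding blk_def by simp

lemma blks_carrier: "\<forall>G\<in>set (blks n Hs ks). G \<in> carrier_mat n n"
  unfolding blks_def by auto

lemma Pm_entry:
  assumes n: "0 < n"
  shows "\<forall>H\<in>set Hs. H \<in> carrier_mat (p*n) (p*n) \<Longrightarrow> length \<alpha> = Suc (length Hs) \<Longrightarrow>
    length \<beta> = Suc (length Hs) \<Longrightarrow> set \<alpha> \<subseteq> {..<n} \<Longrightarrow> set \<beta> \<subseteq> {..<n} \<Longrightarrow>
    i < p*n \<Longrightarrow> j < p*n \<Longrightarrow>
    Pm n p \<alpha> \<beta> Hs $$ (i,j) = (\<Sum>ks\<in>paths p (length Hs) (i div n) (j div n).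
       emono n \<alpha> \<beta> (blks n Hs ks) $$ (i mod n, j mod n))"
proof (induction Hs arbitrary: \<alpha> \<beta> i)
  case Nil
  have iq: "i div n < p" using Nil by (simp add: less_mult_imp_div_less)
  have im: "i mod n < n" "j mod n < n" using n by auto
  show ?case
    using Nil iq im by (simp add: paths_0 emono_Nil blks_def Amp_def Eunit_def)
next
  case (Cons H Hs)
  define q where "q = i div n"
  define x where "x = i mod n"
  define r where "r = j div n"
  define y where "y = j mod n"
  define a where "a = \<alpha>!0"
  define b where "b = \<beta>!0"
  define R where "R = Pm n p (tl \<alpha>) (tl \<beta>) Hs"
  have Hc: "H \<in> carrier_mat (p*n) (p*n)" using Cons.prems by simp
  have Hsc: "\<forall>H\<in>set Hs. H \<in> carrier_mat (p*n) (p*n)" using Cons.prems by simp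
  have Rc: "R \<in> carrier_mat (p*n) (p*n)" unfolding R_def using Pm_carrier[OF Hsc] .
  have ane: "\<alpha> \<noteq> []" "\<beta> \<noteq> []" using Cons.prems by auto
  have b: "b < n" unfolding b_def using Cons.prems(5) ane by (cases \<beta>) auto
  have iq: "q < p" unfolding q_def using Cons.prems by (simp add: less_mult_imp_div_less)
  have xy: "x < n" "y < n" unfolding x_def y_def using n by auto
  have qb: "q*n + b < p*n"
  proof -
    have "q*n + b < q*n + n" using b by simp
    also have "q*n + n = Suc q * n" by simp
    also have "\<dots> \<le> p * n" using iq by (intro mult_le_mono1) simp
    finally show ?thesis .
  qed
  have IH: "R $$ (u*n+z, j) = (\<Sum>ks\<in>paths p (length Hs) u r.
       emono n (tl \<alpha>) (tl \<beta>) (blks n Hs ks) $$ (z, y))" if u: "u < p" and z: "z < n" for u z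
  proof -
    have "u*n + z < u*n + n" using z by simp
    also have "u*n + n = Suc u * n" by simp
    also have "\<dots> \<le> p * n" using u by (intro mult_le_mono1) simp
    finally have lt: "u*n+z < p*n" .
    have dm: "(u*n+z) div n = u" "(u*n+z) mod n = z" using z n by auto
    show ?thesis unfolding R_def r_def y_def
      using Cons.IH[OF Hsc _ _ _ _ lt Cons.prems(7), of "tl \<alpha>" "tl \<beta>"] Cons.prems(2-5) dm
      by (simp add: list.set_sel(2) subset_code(1) ane)
  qed
  have "Pm n p \<alpha> \<beta> (H#Hs) $$ (i,j) = (Amp n p a b * (H * R)) $$ (i,j)"
    unfolding a_def b_def R_def by simp
  also have "\<dots> = (if x = a then (H * R) $$ (q*n + b, j) else 0)"
    unfolding x_def q_def by (rule Amp_mult_entry[OF n _ Cons.prems(6) Cons.prems(7) b]) (use Hc Rc in simp)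
  also have "\<dots> = (if x = a then (\<Sum>z<p*n. H $$ (q*n+b, z) * R $$ (z, j)) else 0)"
    using mat_mult_entry[OF Hc Rc qb Cons.prems(7)] by simp
  also have "\<dots> = (if x = a then (\<Sum>u<p. \<Sum>z<n. H $$ (q*n+b, u*n+z) * R $$ (u*n+z, j)) else 0)"
    by (simp add: sum_split_blocks[where p=p and n=n])
  also have "\<dots> = (if x = a then (\<Sum>u<p. \<Sum>z<n. blk n H q u $$ (b, z) *
       (\<Sum>ks\<in>paths p (length Hs) u r. emono n (tl \<alpha>) (tl \<beta>) (blks n Hs ks) $$ (z, y))) else 0)"
    using IH b by (simp add: blk_entry)
  also have "\<dots> = (if x = a then (\<Sum>u<p. \<Sum>ks\<in>paths p (length Hs) u r. \<Sum>z<n. blk n H q u $$ (b, z) *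
       emono n (tl \<alpha>) (tl \<beta>) (blks n Hs ks) $$ (z, y)) else 0)"
    by (simp add: sum_distrib_left) (intro impI sum.cong[OF refl] sum.swap)
  also have "\<dots> = (\<Sum>u<p. \<Sum>ks\<in>paths p (length Hs) u r. emono n \<alpha> \<beta> (blks n (H#Hs) (q#ks)) $$ (x, y))"
  proof -
    have "emono n \<alpha> \<beta> (blks n (H#Hs) (q#ks)) $$ (x, y) = (if x = a then \<Sum>z<n. blk n H q u $$ (b, z) *
       emono n (tl \<alpha>) (tl \<beta>) (blks n Hs ks) $$ (z, y) else 0)" if ks: "ks \<in> paths p (length Hs) u r" for u ks
    proof -
      have k0: "ks ! 0 = u" using ks unfolding paths_def by simp
      show ?thesis unfolding blks_Cons k0 emono_Cons[OF ane] a_def[symmetric] b_def[symmetric]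
        by (rule Eunit_GR_entry[OF blk_carrier emono_carrier xy b])
    qed
    then show ?thesis by (cases "x = a") simp_all
  qed
  also have "\<dots> = (\<Sum>ks\<in>paths p (length (H#Hs)) q r. emono n \<alpha> \<beta> (blks n (H#Hs) ks) $$ (x, y))"
    by (simp add: sum_paths_Suc[OF iq])
  finally show ?case unfolding q_def r_def x_def y_def .
qed



definition vsq :: "complex vec \<Rightarrow> real" where
  "vsq v = (\<Sum>i<dim_vec v. (cmod (v $ i))\<^sup>2)"

lemma vnorm_vsq: "vnorm v = sqrt (vsq v)"
  unfolding vnorm_def vsq_def ..

lemma vnorm_mono_vsq: "vsq w \<le> vsq v \<Longrightarrow> vnorm w \<le> vnorm v"
  unfolding vnorm_vsq by simp

lemma mat_vec_entry:
  assumes "A \<in> carrier_mat r k" "v \<in> carrier_vec k" "i < r"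
  shows "(A *\<^sub>v v) $ i = (\<Sum>m<k. A $$ (i,m) * v $ m)"
  using assms by (simp add: scalar_prod_def lessThan_atLeast0)

lemma sum_if_single: "a < (n::nat) \<Longrightarrow> (\<Sum>z<n. (cmod (if z = a then X else 0))\<^sup>2) = (cmod X)\<^sup>2"
proof -
  have "(\<Sum>z<n. (cmod (if z = a then X else 0))\<^sup>2) = (\<Sum>z<n. if z = a then (cmod X)\<^sup>2 else 0)"
    by (rule sum.cong) auto
  also have "\<dots> = (if a \<in> {..<n} then (cmod X)\<^sup>2 else 0)"
    by (rule sum.delta) simp
  finally show "a < n \<Longrightarrow> ?thesis" by simp
qed

lemma Amp_contr:
  assumes n: "0 < n" and a: "a < n" and b: "b < n" and v: "v \<in> carrier_vec (p*n)"
  shows "vnorm (Amp n p a b *\<^sub>v v) \<le> vnorm v"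
proof (rule vnorm_mono_vsq)
  have e: "(Amp n p a b *\<^sub>v v) $ i = (if i mod n = a then v $ ((i div n)*n + b) else 0)" if i: "i < p*n" for i
  proof -
    have iq: "i div n < p" using i by (simp add: less_mult_imp_div_less)
    have "(Amp n p a b *\<^sub>v v) $ i = (\<Sum>u<p. \<Sum>z<n. Amp n p a b $$ (i,u*n+z) * v $ (u*n+z))"
      by (simp add: mat_vec_entry[OF Amp_carrier v i] sum_split_blocks[where p=p and n=n])
    also have "\<dots> = (\<Sum>u<p. \<Sum>z<n. if u = i div n \<and> z = b \<and> i mod n = a then v $ (u*n+z) else 0)"
    proof (rule sum.cong[OF refl], rule sum.cong[OF refl])
      fix u z assume u: "u \<in> {..<p}" and z: "z \<in> {..<n}"
      have "u*n + z < u*n + n" using z by simp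
      also have "u*n + n = Suc u * n" by simp
      also have "\<dots> \<le> p * n" using u by (intro mult_le_mono1) simp
      finally have lt: "u*n+z < p*n" .
      have "(u*n+z) div n = u" "(u*n+z) mod n = z" using z n by auto
      then show "Amp n p a b $$ (i,u*n+z) * v $ (u*n+z) = (if u = i div n \<and> z = b \<and> i mod n = a then v $ (u*n+z) else 0)"
        using lt i unfolding Amp_def by auto
    qed
    also have "\<dots> = (\<Sum>u<p. if u = i div n then (if i mod n = a then v $ ((i div n)*n + b) else 0) else 0)"
    proof (rule sum.cong[OF refl])
      fix u assume "u \<in> {..<p}"
      show "(\<Sum>z<n. if u = i div n \<and> z = b \<and> i mod n = a then v $ (u*n+z) else 0) =
        (if u = i div n then (if i mod n = a then v $ ((i div n)*n + b) else 0) else 0)"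
        using b by (cases "u = i div n"; cases "i mod n = a") auto
    qed
    also have "\<dots> = (if i mod n = a then v $ ((i div n)*n + b) else 0)"
      using iq by simp
    finally show ?thesis .
  qed
  have "vsq (Amp n p a b *\<^sub>v v) = (\<Sum>i<p*n. (cmod (if i mod n = a then v $ ((i div n)*n + b) else 0))\<^sup>2)"
    unfolding vsq_def using e by (intro sum.cong) (auto simp: Amp_def)
  also have "\<dots> = (\<Sum>u<p. \<Sum>z<n. (cmod (if z = a then v $ (u*n + b) else 0))\<^sup>2)"
    unfolding sum_split_blocks[where p=p and n=n]
    by (intro sum.cong refl) (use n in auto)
  also have "\<dots> = (\<Sum>u<p. (cmod (v $ (u*n + b)))\<^sup>2)"
    by (intro sum.cong refl sum_if_single a)
  also have "\<dots> \<le> (\<Sum>u<p. \<Sum>z<n. (cmod (v $ (u*n + z)))\<^sup>2)"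
    by (intro sum_mono member_le_sum[where f="\<lambda>z. (cmod (v $ (_*n + z)))\<^sup>2"]) (use b in auto)
  also have "\<dots> = vsq v"
    unfolding vsq_def using v sum_split_blocks[where p=p and n=n and g="\<lambda>i. (cmod (v $ i))\<^sup>2"] by simp
  finally show "vsq (Amp n p a b *\<^sub>v v) \<le> vsq v" .
qed

lemma colstack_carrier: "is_tup d k X \<Longrightarrow> colstack k X \<in> carrier_mat (d*k) k"
  unfolding colstack_def is_tup_def by simp

lemma colstack_entry:
  assumes X: "is_tup d k X" and w: "w < d" and i: "i < k" and v: "v \<in> carrier_vec k"
  shows "(colstack k X *\<^sub>v v) $ (w*k + i) = (X!w *\<^sub>v v) $ i"
proof -
  have "w*k + i < w*k + k" using i by simp
  also have "w*k + k = Suc w * k" by simp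
  also have "\<dots> \<le> d * k" using w by (intro mult_le_mono1) simp
  finally have lt: "w*k+i < d*k" .
  have Xw: "X!w \<in> carrier_mat k k" using X w unfolding is_tup_def by auto
  have dm: "(w*k+i) div k = w" "(w*k+i) mod k = i" using i by auto
  show ?thesis
    unfolding mat_vec_entry[OF colstack_carrier[OF X] v lt] mat_vec_entry[OF Xw v i]
    using lt X dm unfolding colstack_def is_tup_def by simp
qed

lemma H_contr:
  assumes X: "is_tup d k X" and c: "colnorm k X \<le> 1" and w: "w < d" and v: "v \<in> carrier_vec k"
  shows "vnorm (X!w *\<^sub>v v) \<le> vnorm v"
proof -
  have Xw: "X!w \<in> carrier_mat k k" using X w unfolding is_tup_def by auto
  let ?c = "colstack k X *\<^sub>v v"
  have "vsq (X!w *\<^sub>v v) = (\<Sum>i<k. (cmod (?c $ (w*k+i)))\<^sup>2)"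
    unfolding vsq_def using Xw colstack_entry[OF X w _ v] by (intro sum.cong) auto
  also have "\<dots> \<le> (\<Sum>u<d. \<Sum>i<k. (cmod (?c $ (u*k+i)))\<^sup>2)"
    by (rule member_le_sum[where f="\<lambda>u. \<Sum>i<k. (cmod (?c $ (u*k+i)))\<^sup>2"]) (use w in \<open>auto intro: sum_nonneg\<close>)
  also have "\<dots> = vsq ?c"
    unfolding vsq_def using colstack_carrier[OF X] sum_split_blocks[where p=d and n=k and g="\<lambda>i. (cmod (?c $ i))\<^sup>2"] by simp
  finally have "vnorm (X!w *\<^sub>v v) \<le> vnorm ?c" by (rule vnorm_mono_vsq)
  also have "\<dots> \<le> opnorm (colstack k X) * vnorm v"
    by (rule vnorm_mult_opnorm) (use colstack_carrier[OF X] v in simp)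
  also have "\<dots> \<le> vnorm v"
    using c vnorm_nonneg[of v] unfolding colnorm_def by (metis mult_left_le_one_le mult.commute opnorm_nonneg)
  finally show ?thesis .
qed

lemma Pm_contr:
  assumes n: "0 < n"
  shows "\<forall>H\<in>set Hs. H \<in> carrier_mat (p*n) (p*n) \<and> (\<forall>v\<in>carrier_vec (p*n). vnorm (H *\<^sub>v v) \<le> vnorm v) \<Longrightarrow>
    length \<alpha> = Suc (length Hs) \<Longrightarrow> length \<beta> = Suc (length Hs) \<Longrightarrow>
    set \<alpha> \<subseteq> {..<n} \<Longrightarrow> set \<beta> \<subseteq> {..<n} \<Longrightarrow> v \<in> carrier_vec (p*n) \<Longrightarrow>
    vnorm (Pm n p \<alpha> \<beta> Hs *\<^sub>v v) \<le> vnorm v"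
proof (induction Hs arbitrary: \<alpha> \<beta> v)
  case Nil
  have "\<alpha>!0 < n" "\<beta>!0 < n" using Nil by (auto simp: length_Suc_conv)
  then show ?case using Amp_contr[OF n _ _ Nil(6)] by simp
next
  case (Cons H Hs)
  have ane: "\<alpha> \<noteq> []" "\<beta> \<noteq> []" using Cons.prems by auto
  have ab: "\<alpha>!0 < n" "\<beta>!0 < n" using Cons.prems(4,5) ane by (cases \<alpha>; cases \<beta>; auto)+
  have Hc: "H \<in> carrier_mat (p*n) (p*n)" and Hcon: "\<forall>v\<in>carrier_vec (p*n). vnorm (H *\<^sub>v v) \<le> vnorm v"
    using Cons.prems by auto
  have Hsc: "\<forall>H\<in>set Hs. H \<in> carrier_mat (p*n) (p*n)" using Cons.prems by simp
  let ?R = "Pm n p (tl \<alpha>) (tl \<beta>) Hs"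
  have Rc: "?R \<in> carrier_mat (p*n) (p*n)" using Pm_carrier[OF Hsc] .
  have tls: "set (tl \<alpha>) \<subseteq> {..<n}" "set (tl \<beta>) \<subseteq> {..<n}"
    using Cons.prems(4,5) by (meson list.set_sel(2) subset_code(1) ane)+
  have IH: "vnorm (?R *\<^sub>v v) \<le> vnorm v"
    using Cons.IH[of "tl \<alpha>" "tl \<beta>" v] Cons.prems tls by auto
  have "Pm n p \<alpha> \<beta> (H#Hs) *\<^sub>v v = Amp n p (\<alpha>!0) (\<beta>!0) *\<^sub>v (H *\<^sub>v (?R *\<^sub>v v))"
    using assoc_mult_mat_vec[OF Amp_carrier mult_carrier_mat[OF Hc Rc] Cons.prems(6)]
      assoc_mult_mat_vec[OF Hc Rc Cons.prems(6)] by simp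
  moreover have "vnorm (Amp n p (\<alpha>!0) (\<beta>!0) *\<^sub>v (H *\<^sub>v (?R *\<^sub>v v))) \<le> vnorm (H *\<^sub>v (?R *\<^sub>v v))"
    by (rule Amp_contr[OF n ab]) (rule mult_mat_vec_carrier[OF Hc mult_mat_vec_carrier[OF Rc Cons.prems(6)]])
  moreover have "vnorm (H *\<^sub>v (?R *\<^sub>v v)) \<le> vnorm (?R *\<^sub>v v)"
    using Hcon mult_mat_vec_carrier[OF Rc Cons.prems(6)] by blast
  ultimately show ?case using IH by (metis (no_types) order_trans)
qed



lemma L2_set_sum_le:
  assumes "finite K"
  shows "L2_set (\<lambda>i. \<Sum>k\<in>K. f k i) A \<le> (\<Sum>k\<in>K. L2_set (f k) A)"
  using assms
proof (induction K rule: finite_induct)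
  case empty
  then show ?case by (simp add: L2_set_0')
next
  case (insert a K)
  have "L2_set (\<lambda>i. \<Sum>k\<in>insert a K. f k i) A = L2_set (\<lambda>i. f a i + (\<Sum>k\<in>K. f k i)) A"
    using insert by simp
  also have "\<dots> \<le> L2_set (f a) A + L2_set (\<lambda>i. \<Sum>k\<in>K. f k i) A"
    by (rule L2_set_triangle_ineq)
  also have "\<dots> \<le> L2_set (f a) A + (\<Sum>k\<in>K. L2_set (f k) A)"
    using insert by simp
  finally show ?case using insert by simp
qed

lemma vnorm_sum_bound:
  assumes K: "finite K" and w: "w \<in> carrier_vec N" and u: "\<forall>k\<in>K. u k \<in> carrier_vec N"
    and e: "\<forall>i<N. w $ i = (\<Sum>k\<in>K. c k * u k $ i)"
  shows "vnorm w \<le> (\<Sum>k\<in>K. cmod (c k) * vnorm (u k))"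
proof -
  have "vnorm w = L2_set (\<lambda>i. cmod (w $ i)) {..<N}" using w by (simp add: vnorm_L2)
  also have "\<dots> \<le> L2_set (\<lambda>i. \<Sum>k\<in>K. cmod (c k) * cmod (u k $ i)) {..<N}"
  proof (rule L2_set_mono)
    fix i assume "i \<in> {..<N}"
    then have "cmod (w $ i) = cmod (\<Sum>k\<in>K. c k * u k $ i)" using e by simp
    also have "\<dots> \<le> (\<Sum>k\<in>K. cmod (c k) * cmod (u k $ i))"
      by (rule order_trans[OF norm_sum]) (simp add: norm_mult)
    finally show "cmod (w $ i) \<le> (\<Sum>k\<in>K. cmod (c k) * cmod (u k $ i))" .
  qed simp
  also have "\<dots> \<le> (\<Sum>k\<in>K. L2_set (\<lambda>i. cmod (c k) * cmod (u k $ i)) {..<N})"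
    by (rule L2_set_sum_le[OF K])
  also have "\<dots> = (\<Sum>k\<in>K. cmod (c k) * vnorm (u k))"
  proof (rule sum.cong[OF refl])
    fix k assume "k \<in> K"
    then have "dim_vec (u k) = N" using u by auto
    then show "L2_set (\<lambda>i. cmod (c k) * cmod (u k $ i)) {..<N} = cmod (c k) * vnorm (u k)"
      by (simp add: vnorm_L2 L2_set_right_distrib)
  qed
  finally show ?thesis .
qed

lemma words_props: "\<omega> \<in> words a l \<Longrightarrow> length \<omega> = l \<and> set \<omega> \<subseteq> {..<a}"
  unfolding words_def by simp

lemma finite_words: "finite (words a l)"
proof -
  have "words a l = {xs. set xs \<subseteq> {..<a} \<and> length xs = l}" unfolding words_def by auto
  then show ?thesis by (simp add: finite_lists_length_eq)
qed

lemma hamp_coeff: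
  assumes n: "0 < n" and cr: "coeff_rep d n fw hf" and w: "\<omega> \<in> words d l"
    and Hs: "length Hs = l" "\<forall>H\<in>set Hs. H \<in> carrier_mat (p*n) (p*n)"
    and ij: "i < p*n" "j < p*n"
  shows "hamp n p (fw \<omega>) Hs $$ (i,j) =
    (\<Sum>\<alpha>\<in>words n (Suc l). \<Sum>\<beta>\<in>words n (Suc l). hf \<alpha> \<beta> \<omega> * Pm n p \<alpha> \<beta> Hs $$ (i,j))"
proof -
  have xy: "i mod n < n" "j mod n < n" using n by auto
  have "hamp n p (fw \<omega>) Hs $$ (i,j) = (\<Sum>ks\<in>paths p l (i div n) (j div n).
        fw \<omega> (blks n Hs ks) $$ (i mod n, j mod n))"
    unfolding hamp_def blks_def[symmetric] using ij Hs by simp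
  also have "\<dots> = (\<Sum>ks\<in>paths p l (i div n) (j div n).
        \<Sum>\<alpha>\<in>words n (Suc l). \<Sum>\<beta>\<in>words n (Suc l). hf \<alpha> \<beta> \<omega> * emono n \<alpha> \<beta> (blks n Hs ks) $$ (i mod n, j mod n))"
  proof (rule sum.cong[OF refl])
    fix ks
    have "length (blks n Hs ks) = l" "\<forall>A\<in>set (blks n Hs ks). A \<in> carrier_mat n n"
      using Hs blks_carrier by auto
    then show "fw \<omega> (blks n Hs ks) $$ (i mod n, j mod n) =
        (\<Sum>\<alpha>\<in>words n (Suc l). \<Sum>\<beta>\<in>words n (Suc l). hf \<alpha> \<beta> \<omega> * emono n \<alpha> \<beta> (blks n Hs ks) $$ (i mod n, j mod n))"
      using cr w xy unfolding coeff_rep_def by blast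
  qed
  also have "\<dots> = (\<Sum>\<alpha>\<in>words n (Suc l). \<Sum>\<beta>\<in>words n (Suc l). \<Sum>ks\<in>paths p l (i div n) (j div n).
        hf \<alpha> \<beta> \<omega> * emono n \<alpha> \<beta> (blks n Hs ks) $$ (i mod n, j mod n))"
    by (subst sum.swap, rule sum.cong[OF refl], rule sum.swap)
  also have "\<dots> = (\<Sum>\<alpha>\<in>words n (Suc l). \<Sum>\<beta>\<in>words n (Suc l). hf \<alpha> \<beta> \<omega> * Pm n p \<alpha> \<beta> Hs $$ (i,j))"
  proof (intro sum.cong refl)
    fix \<alpha> \<beta> assume a: "\<alpha> \<in> words n (Suc l)" and b: "\<beta> \<in> words n (Suc l)"
    show "(\<Sum>ks\<in>paths p l (i div n) (j div n). hf \<alpha> \<beta> \<omega> * emono n \<alpha> \<beta> (blks n Hs ks) $$ (i mod n, j mod n)) =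
      hf \<alpha> \<beta> \<omega> * Pm n p \<alpha> \<beta> Hs $$ (i,j)"
      using Pm_entry[OF n Hs(2) _ _ _ _ ij] words_props[OF a] words_props[OF b] Hs(1)
      by (simp add: sum_distrib_left)
  qed
  finally show ?thesis .
qed

definition HS :: "complex mat list list \<Rightarrow> nat list \<Rightarrow> complex mat list" where
  "HS Xs \<omega> = map (\<lambda>t. Xs ! t ! (\<omega> ! t)) [0..<length Xs]"

definition valid_Xs :: "nat \<Rightarrow> nat \<Rightarrow> complex mat list list \<Rightarrow> bool" where
  "valid_Xs d k Xs \<longleftrightarrow> (\<forall>X\<in>set Xs. is_tup d k X \<and> colnorm k X \<le> 1)"

lemma HS_carrier:
  assumes "valid_Xs d k Xs" "\<omega> \<in> words d (length Xs)"
  shows "\<forall>H\<in>set (HS Xs \<omega>). H \<in> carrier_mat k k \<and> (\<forall>v\<in>carrier_vec k. vnorm (H *\<^sub>v v) \<le> vnorm v)"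
proof
  fix H assume "H \<in> set (HS Xs \<omega>)"
  then obtain t where t: "t < length Xs" and H: "H = Xs ! t ! (\<omega> ! t)" unfolding HS_def by auto
  have X: "is_tup d k (Xs!t)" "colnorm k (Xs!t) \<le> 1" using assms(1) t unfolding valid_Xs_def by auto
  have wt: "\<omega> ! t < d" using words_props[OF assms(2)] t by (metis lessThan_iff nth_mem subsetD)
  show "H \<in> carrier_mat k k \<and> (\<forall>v\<in>carrier_vec k. vnorm (H *\<^sub>v v) \<le> vnorm v)"
    using X wt H H_contr[OF X(1) X(2) wt] unfolding is_tup_def by auto
qed

lemma fl_entry:
  assumes n: "0 < n" and cr: "coeff_rep d n fw hf" and V: "valid_Xs d (p*n) Xs"
    and ij: "i < p*n" "j < p*n"
  shows "fl_amp d n fw p Xs $$ (i,j) = (\<Sum>\<omega>\<in>words d (length Xs).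
      \<Sum>\<alpha>\<in>words n (Suc (length Xs)). \<Sum>\<beta>\<in>words n (Suc (length Xs)). hf \<alpha> \<beta> \<omega> * Pm n p \<alpha> \<beta> (HS Xs \<omega>) $$ (i,j))"
proof -
  have "fl_amp d n fw p Xs $$ (i,j) = (\<Sum>\<omega>\<in>words d (length Xs). hamp n p (fw \<omega>) (HS Xs \<omega>) $$ (i,j))"
    unfolding fl_amp_def HS_def[symmetric] using ij by (simp only: index_mat split)
  also have "\<dots> = (\<Sum>\<omega>\<in>words d (length Xs).
      \<Sum>\<alpha>\<in>words n (Suc (length Xs)). \<Sum>\<beta>\<in>words n (Suc (length Xs)). hf \<alpha> \<beta> \<omega> * Pm n p \<alpha> \<beta> (HS Xs \<omega>) $$ (i,j))"
  proof (rule sum.cong[OF refl])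
    fix \<omega> assume w: "\<omega> \<in> words d (length Xs)"
    have l: "length (HS Xs \<omega>) = length Xs" unfolding HS_def by simp
    have c: "\<forall>H\<in>set (HS Xs \<omega>). H \<in> carrier_mat (p*n) (p*n)" using HS_carrier[OF V w] by blast
    show "hamp n p (fw \<omega>) (HS Xs \<omega>) $$ (i,j) = (\<Sum>\<alpha>\<in>words n (Suc (length Xs)). \<Sum>\<beta>\<in>words n (Suc (length Xs)). hf \<alpha> \<beta> \<omega> * Pm n p \<alpha> \<beta> (HS Xs \<omega>) $$ (i,j))"
      by (rule hamp_coeff[OF n cr w l c ij])
  qed
  finally show ?thesis .
qed



lemma triple_sum:
  "(\<Sum>\<omega>\<in>A. \<Sum>\<alpha>\<in>B. \<Sum>\<beta>\<in>C. g (\<omega>,\<alpha>,\<beta>)) = sum g (A \<times> B \<times> C)"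
  by (simp add: sum.cartesian_product)

definition Kb :: "nat \<Rightarrow> nat \<Rightarrow> (nat list \<Rightarrow> nat list \<Rightarrow> nat list \<Rightarrow> complex) \<Rightarrow> nat \<Rightarrow> real" where
  "Kb d n hf l = (\<Sum>\<omega>\<in>words d l. \<Sum>\<alpha>\<in>words n (Suc l). \<Sum>\<beta>\<in>words n (Suc l). cmod (hf \<alpha> \<beta> \<omega>))"

lemma fl_carrier: "fl_amp d n fw p Xs \<in> carrier_mat (p*n) (p*n)"
  unfolding fl_amp_def by simp

lemma fl_upper:
  assumes n: "0 < n" and cr: "coeff_rep d n fw hf" and V: "valid_Xs d (p*n) Xs" and l: "length Xs = l"
  shows "opnorm (fl_amp d n fw p Xs) \<le> Kb d n hf l"
proof (rule opnorm_le)
  fix v assume v0: "v \<in> carrier_vec (dim_col (fl_amp d n fw p Xs))" and v1: "vnorm v \<le> 1"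
  have v: "v \<in> carrier_vec (p*n)" using v0 fl_carrier[of d n fw p Xs] by simp
  define K where "K = words d l \<times> words n (Suc l) \<times> words n (Suc l)"
  define c where "c = (\<lambda>(\<omega>::nat list,\<alpha>::nat list,\<beta>::nat list). hf \<alpha> \<beta> \<omega>)"
  define u where "u = (\<lambda>(\<omega>,\<alpha>,\<beta>). Pm n p \<alpha> \<beta> (HS Xs \<omega>) *\<^sub>v v)"
  have Kf: "finite K" unfolding K_def by (simp add: finite_words)
  have Pmc: "Pm n p \<alpha> \<beta> (HS Xs \<omega>) \<in> carrier_mat (p*n) (p*n)" if "\<omega> \<in> words d l" for \<alpha> \<beta> \<omega>
    using Pm_carrier HS_carrier[OF V, of \<omega>] that l by blast
  have uc: "\<forall>k\<in>K. u k \<in> carrier_vec (p*n)"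
    unfolding K_def u_def using Pmc v by (auto intro: mult_mat_vec_carrier)
  have wc: "fl_amp d n fw p Xs *\<^sub>v v \<in> carrier_vec (p*n)"
    using fl_carrier v by (rule mult_mat_vec_carrier)
  have e: "\<forall>i<p*n. (fl_amp d n fw p Xs *\<^sub>v v) $ i = (\<Sum>k\<in>K. c k * u k $ i)"
  proof (intro allI impI)
    fix i assume i: "i < p*n"
    have "(fl_amp d n fw p Xs *\<^sub>v v) $ i = (\<Sum>m<p*n. fl_amp d n fw p Xs $$ (i,m) * v $ m)"
      by (rule mat_vec_entry[OF fl_carrier v i])
    also have "\<dots> = (\<Sum>m<p*n. (\<Sum>k\<in>K. c k * Pm n p (fst (snd k)) (snd (snd k)) (HS Xs (fst k)) $$ (i,m)) * v $ m)"
    proof (rule sum.cong[OF refl])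
      fix m assume "m \<in> {..<p*n}"
      then have m: "m < p*n" by simp
      show "fl_amp d n fw p Xs $$ (i,m) * v $ m = (\<Sum>k\<in>K. c k * Pm n p (fst (snd k)) (snd (snd k)) (HS Xs (fst k)) $$ (i,m)) * v $ m"
        unfolding fl_entry[OF n cr V i m] K_def l triple_sum[where g="\<lambda>k. c k * Pm n p (fst (snd k)) (snd (snd k)) (HS Xs (fst k)) $$ (i,m)", symmetric]
        by (simp add: c_def)
    qed
    also have "\<dots> = (\<Sum>k\<in>K. c k * (\<Sum>m<p*n. Pm n p (fst (snd k)) (snd (snd k)) (HS Xs (fst k)) $$ (i,m) * v $ m))"
      by (simp add: sum_distrib_right sum_distrib_left mult.assoc) (rule sum.swap)
    also have "\<dots> = (\<Sum>k\<in>K. c k * u k $ i)"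
    proof (rule sum.cong[OF refl])
      fix k assume k: "k \<in> K"
      obtain \<omega> \<alpha> \<beta> where kk: "k = (\<omega>,\<alpha>,\<beta>)" by (cases k) auto
      have w: "\<omega> \<in> words d l" using k kk unfolding K_def by auto
      show "c k * (\<Sum>m<p*n. Pm n p (fst (snd k)) (snd (snd k)) (HS Xs (fst k)) $$ (i,m) * v $ m) = c k * u k $ i"
        unfolding kk u_def using mat_vec_entry[OF Pmc[OF w] v i] by simp
    qed
    finally show "(fl_amp d n fw p Xs *\<^sub>v v) $ i = (\<Sum>k\<in>K. c k * u k $ i)" .
  qed
  have "vnorm (fl_amp d n fw p Xs *\<^sub>v v) \<le> (\<Sum>k\<in>K. cmod (c k) * vnorm (u k))"
    by (rule vnorm_sum_bound[OF Kf wc uc e])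
  also have "\<dots> \<le> (\<Sum>k\<in>K. cmod (c k))"
  proof (rule sum_mono)
    fix k assume k: "k \<in> K"
    obtain \<omega> \<alpha> \<beta> where kk: "k = (\<omega>,\<alpha>,\<beta>)" by (cases k) auto
    have w: "\<omega> \<in> words d l" and a: "\<alpha> \<in> words n (Suc l)" and b: "\<beta> \<in> words n (Suc l)"
      using k kk unfolding K_def by auto
    have hl: "length (HS Xs \<omega>) = l" unfolding HS_def using l by simp
    have "vnorm (u k) \<le> vnorm v"
      unfolding kk u_def using Pm_contr[OF n HS_carrier[OF V] _ _ _ _ v, of \<omega> \<alpha> \<beta>] w l hl
        words_props[OF a] words_props[OF b] by simp
    then have "vnorm (u k) \<le> 1" using v1 by simp
    then show "cmod (c k) * vnorm (u k) \<le> cmod (c k)"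
      by (simp add: mult_left_le)
  qed
  also have "\<dots> = Kb d n hf l"
    unfolding Kb_def K_def triple_sum[where g="\<lambda>k. cmod (c k)", symmetric] by (simp add: c_def)
  finally show "vnorm (fl_amp d n fw p Xs *\<^sub>v v) \<le> Kb d n hf l" .
qed

definition cbset :: "nat \<Rightarrow> nat \<Rightarrow> (nat list \<Rightarrow> complex mat list \<Rightarrow> complex mat) \<Rightarrow> nat \<Rightarrow> real set" where
  "cbset d n fw l = {opnorm (fl_amp d n fw p Xs) | p Xs. p \<ge> 1 \<and> length Xs = l \<and>
      (\<forall>X\<in>set Xs. is_tup d (p * n) X \<and> colnorm (p * n) X \<le> 1)}"

lemma cbnorm_cbset: "cbnorm d n fw l = Sup (cbset d n fw l)"
  unfolding cbnorm_def cbset_def ..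

lemma cbset_bdd:
  assumes n: "0 < n" and cr: "coeff_rep d n fw hf"
  shows "bdd_above (cbset d n fw l)"
  unfolding bdd_above_def cbset_def
  using fl_upper[OF n cr] unfolding valid_Xs_def by blast

lemma le_cbnorm:
  assumes n: "0 < n" and cr: "coeff_rep d n fw hf" and V: "valid_Xs d (p*n) Xs" and p: "p \<ge> 1"
  shows "opnorm (fl_amp d n fw p Xs) \<le> cbnorm d n fw (length Xs)"
  unfolding cbnorm_cbset
  by (rule cSup_upper[OF _ cbset_bdd[OF n cr]]) (use V p in \<open>auto simp: cbset_def valid_Xs_def\<close>)



lemma Eunit_entry: "r < n \<Longrightarrow> c < n \<Longrightarrow> Eunit n a b $$ (r,c) = (if r = a \<and> c = b then 1 else 0)"
  unfolding Eunit_def by simp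

lemma emono_zero:
  "\<forall>G\<in>set Gs. G \<in> carrier_mat n n \<Longrightarrow> length \<alpha> = Suc (length Gs) \<Longrightarrow> length \<beta> = Suc (length Gs) \<Longrightarrow>
   t < length Gs \<Longrightarrow> Gs ! t = 0\<^sub>m n n \<Longrightarrow> emono n \<alpha> \<beta> Gs = 0\<^sub>m n n"
proof (induction Gs arbitrary: \<alpha> \<beta> t)
  case Nil
  then show ?case by simp
next
  case (Cons G Gs)
  have ane: "\<alpha> \<noteq> []" "\<beta> \<noteq> []" using Cons.prems by auto
  let ?R = "emono n (tl \<alpha>) (tl \<beta>) Gs"
  have Rc: "?R \<in> carrier_mat n n" by (rule emono_carrier)
  have Gc: "G \<in> carrier_mat n n" using Cons.prems by simp
  show ?case
  proof (cases t)
    case 0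
    then have "G = 0\<^sub>m n n" using Cons.prems by simp
    then show ?thesis unfolding emono_Cons[OF ane]
      using left_mult_zero_mat[OF Rc] right_mult_zero_mat[OF Eunit_carrier] by simp
  next
    case (Suc t')
    have "?R = 0\<^sub>m n n"
      using Cons.IH[of "tl \<alpha>" "tl \<beta>" t'] Cons.prems Suc by auto
    then show ?thesis unfolding emono_Cons[OF ane]
      using right_mult_zero_mat[OF Gc] right_mult_zero_mat[OF Eunit_carrier] by simp
  qed
qed

lemma emono_units:
  "length \<alpha> = Suc (length ps) \<Longrightarrow> length \<beta> = Suc (length ps) \<Longrightarrow>
   \<forall>(a,b)\<in>set ps. a < n \<and> b < n \<Longrightarrow> set \<beta> \<subseteq> {..<n} \<Longrightarrow> x < n \<Longrightarrow> y < n \<Longrightarrow>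
   emono n \<alpha> \<beta> (map (\<lambda>(a,b). Eunit n a b) ps) $$ (x,y) =
     (if x = \<alpha>!0 \<and> y = \<beta>!(length ps) \<and> (\<forall>t<length ps. \<beta>!t = fst (ps!t) \<and> \<alpha>!Suc t = snd (ps!t)) then 1 else 0)"
proof (induction ps arbitrary: \<alpha> \<beta> x)
  case Nil
  then show ?case by (simp add: emono_Nil Eunit_def)
next
  case (Cons ab ps)
  obtain a b where ab: "ab = (a,b)" by (cases ab) auto
  obtain a0 \<alpha>' where \<alpha>: "\<alpha> = a0 # \<alpha>'" using Cons.prems by (cases \<alpha>) auto
  obtain b0 \<beta>' where \<beta>: "\<beta> = b0 # \<beta>'" using Cons.prems by (cases \<beta>) auto
  have abn: "a < n" "b < n" using Cons.prems ab by auto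
  have b0: "b0 < n" using Cons.prems \<beta> by auto
  let ?R = "emono n \<alpha>' \<beta>' (map (\<lambda>(a,b). Eunit n a b) ps)"
  have IH: "?R $$ (b, y) = (if b = \<alpha>'!0 \<and> y = \<beta>'!(length ps) \<and> (\<forall>t<length ps. \<beta>'!t = fst (ps!t) \<and> \<alpha>'!Suc t = snd (ps!t)) then 1 else 0)"
    using Cons.IH[of \<alpha>' \<beta>' b] Cons.prems abn \<alpha> \<beta> by auto
  have "emono n \<alpha> \<beta> (map (\<lambda>(a,b). Eunit n a b) (ab#ps)) $$ (x,y) =
      (Eunit n a0 b0 * (Eunit n a b * ?R)) $$ (x,y)"
    unfolding \<alpha> \<beta> ab by (simp add: emono_Cons)
  also have "\<dots> = (if x = a0 then \<Sum>m<n. Eunit n a b $$ (b0,m) * ?R $$ (m,y) else 0)"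
    by (rule Eunit_GR_entry[OF Eunit_carrier emono_carrier Cons.prems(5,6) b0])
  also have "\<dots> = (if x = a0 then (if b0 = a then ?R $$ (b,y) else 0) else 0)"
  proof -
    have "(\<Sum>m<n. Eunit n a b $$ (b0,m) * ?R $$ (m,y)) = (\<Sum>m<n. if m = b then (if b0 = a then ?R $$ (m,y) else 0) else 0)"
      using b0 by (intro sum.cong) (auto simp: Eunit_entry)
    also have "\<dots> = (if b0 = a then ?R $$ (b,y) else 0)" using abn by simp
    finally show ?thesis by simp
  qed
  also have "\<dots> = (if x = \<alpha>!0 \<and> y = \<beta>!(length (ab#ps)) \<and> (\<forall>t<length (ab#ps). \<beta>!t = fst ((ab#ps)!t) \<and> \<alpha>!Suc t = snd ((ab#ps)!t)) then 1 else 0)"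
    unfolding IH \<alpha> \<beta> ab by (auto simp: All_less_Suc2)
  finally show ?case .
qed



definition utup :: "nat \<Rightarrow> nat \<Rightarrow> nat \<Rightarrow> nat \<Rightarrow> nat \<Rightarrow> complex mat list" where
  "utup n d w0 x y = map (\<lambda>w. if w = w0 then Eunit n x y else 0\<^sub>m n n) [0..<d]"

lemma utup_tup: "is_tup d n (utup n d w0 x y)"
  unfolding is_tup_def utup_def by auto

lemma utup_colnorm:
  assumes w0: "w0 < d" and x: "x < n" and y: "y < n"
  shows "colnorm n (utup n d w0 x y) \<le> 1"
  unfolding colnorm_def
proof (rule opnorm_le)
  let ?X = "utup n d w0 x y"
  have csc: "colstack n ?X \<in> carrier_mat (d*n) n" using colstack_carrier[OF utup_tup] .
  fix v assume v0: "v \<in> carrier_vec (dim_col (colstack n ?X))" and v1: "vnorm v \<le> 1"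
  have v: "v \<in> carrier_vec n" using v0 csc by simp
  have lt: "w0*n + x < d*n"
  proof -
    have "w0*n + x < w0*n + n" using x by simp
    also have "w0*n + n = Suc w0 * n" by simp
    also have "\<dots> \<le> d * n" using w0 by (intro mult_le_mono1) simp
    finally show ?thesis .
  qed
  have e: "(colstack n ?X *\<^sub>v v) $ k = (if k = w0*n + x then v $ y else 0)" if k: "k < d*n" for k
  proof -
    have kd: "k div n < d" using k by (simp add: less_mult_imp_div_less)
    have km: "k mod n < n" using x by simp
    have "(colstack n ?X *\<^sub>v v) $ k = (\<Sum>m<n. colstack n ?X $$ (k,m) * v $ m)"
      by (rule mat_vec_entry[OF csc v k])
    also have "\<dots> = (\<Sum>m<n. if m = y then (if k = w0*n + x then v $ m else 0) else 0)"
    proof (rule sum.cong[OF refl])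
      fix m assume "m \<in> {..<n}"
      then have m: "m < n" by simp
      have eq: "(k div n = w0 \<and> k mod n = x) = (k = w0*n + x)"
        using x by (metis div_mult_self1 mod_mult_self2 div_less mod_less add.commute div_mult_mod_eq gr_implies_not0 add_cancel_right_left mult.commute nat_neq_iff)
      have "colstack n ?X $$ (k,m) = ?X ! (k div n) $$ (k mod n, m)"
        unfolding colstack_def using k m utup_tup[unfolded is_tup_def] by (simp add: utup_def)
      also have "\<dots> = (if k div n = w0 then Eunit n x y $$ (k mod n, m) else 0)"
        unfolding utup_def using kd km m by simp
      also have "\<dots> = (if k = w0*n + x \<and> m = y then 1 else 0)"
        using km m eq by (auto simp: Eunit_entry)
      finally show "colstack n ?X $$ (k,m) * v $ m = (if m = y then (if k = w0*n + x then v $ m else 0) else 0)"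
        by simp
    qed
    also have "\<dots> = (if k = w0*n + x then v $ y else 0)" using y by simp
    finally show ?thesis .
  qed
  have "vsq (colstack n ?X *\<^sub>v v) = (\<Sum>k<d*n. (cmod (if k = w0*n + x then v $ y else 0))\<^sup>2)"
    unfolding vsq_def using csc e by (intro sum.cong) auto
  also have "\<dots> = (cmod (v $ y))\<^sup>2" by (rule sum_if_single[OF lt])
  also have "\<dots> \<le> vsq v"
    unfolding vsq_def using v y by (intro member_le_sum[where f="\<lambda>i. (cmod (v $ i))\<^sup>2"]) auto
  finally have "vnorm (colstack n ?X *\<^sub>v v) \<le> vnorm v" by (rule vnorm_mono_vsq)
  then show "vnorm (colstack n ?X *\<^sub>v v) \<le> 1" using v1 by simp
qed

definition Xs0 :: "nat \<Rightarrow> nat \<Rightarrow> nat list \<Rightarrow> nat list \<Rightarrow> nat list \<Rightarrow> complex mat list list" where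
  "Xs0 n d \<alpha>0 \<beta>0 \<omega>0 = map (\<lambda>t. utup n d (\<omega>0!t) (\<beta>0!t) (\<alpha>0!Suc t)) [0..<length \<omega>0]"

lemma Xs0_valid:
  assumes a: "\<alpha>0 \<in> words n (Suc l)" and b: "\<beta>0 \<in> words n (Suc l)" and w: "\<omega>0 \<in> words d l"
  shows "valid_Xs d (1*n) (Xs0 n d \<alpha>0 \<beta>0 \<omega>0)"
  unfolding valid_Xs_def
proof
  fix X assume "X \<in> set (Xs0 n d \<alpha>0 \<beta>0 \<omega>0)"
  then obtain t where t: "t < length \<omega>0" and X: "X = utup n d (\<omega>0!t) (\<beta>0!t) (\<alpha>0!Suc t)"
    unfolding Xs0_def by auto
  have "\<omega>0!t < d" "\<beta>0!t < n" "\<alpha>0!Suc t < n"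
    using words_props[OF a] words_props[OF b] words_props[OF w] t
    by (metis lessThan_iff nth_mem subsetD Suc_mono less_SucI)+
  then show "is_tup d (1*n) X \<and> colnorm (1*n) X \<le> 1"
    using X utup_tup utup_colnorm by simp
qed

lemma length_Xs0[simp]: "length (Xs0 n d \<alpha>0 \<beta>0 \<omega>0) = length \<omega>0"
  unfolding Xs0_def by simp

lemma HS_Xs0:
  assumes w: "\<omega> \<in> words d l" and w0: "\<omega>0 \<in> words d l"
  shows "HS (Xs0 n d \<alpha>0 \<beta>0 \<omega>0) \<omega> = map (\<lambda>t. if \<omega>!t = \<omega>0!t then Eunit n (\<beta>0!t) (\<alpha>0!Suc t) else 0\<^sub>m n n) [0..<l]"
proof -
  have l: "length \<omega>0 = l" using words_props[OF w0] by simp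
  have "\<omega>!t < d" if "t < l" for t using words_props[OF w] that by (metis lessThan_iff nth_mem subsetD)
  then show ?thesis unfolding HS_def Xs0_def utup_def l by simp
qed

lemma paths_1: "paths 1 l 0 0 = {replicate (Suc l) 0}"
proof
  show "paths 1 l 0 0 \<subseteq> {replicate (Suc l) 0}"
  proof
    fix ks assume "ks \<in> paths 1 l 0 0"
    then have "length ks = Suc l" "set ks \<subseteq> {0}" unfolding paths_def by auto
    then have "ks = replicate (Suc l) 0"
      by (metis replicate_eqI singletonD subsetD)
    then show "ks \<in> {replicate (Suc l) 0}" by simp
  qed
qed (auto simp: paths_def nth_replicate simp del: replicate_Suc)

lemma blks_replicate:
  assumes "\<forall>H\<in>set Hs. H \<in> carrier_mat n n"
  shows "blks n Hs (replicate (Suc (length Hs)) 0) = Hs"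
proof (rule nth_equalityI)
  fix t assume t: "t < length (blks n Hs (replicate (Suc (length Hs)) 0))"
  then have t': "t < length Hs" by simp
  have Hc: "Hs ! t \<in> carrier_mat n n" using assms t' by simp
  have "blk n (Hs!t) 0 0 = Hs ! t"
    by (rule eq_matI) (use Hc in \<open>auto simp: blk_def\<close>)
  then show "blks n Hs (replicate (Suc (length Hs)) 0) ! t = Hs ! t"
    unfolding blks_def using t' by (simp add: nth_replicate del: replicate_Suc)
qed simp

lemma Pm1:
  assumes n: "0 < n" and Hs: "\<forall>H\<in>set Hs. H \<in> carrier_mat n n"
    and a: "length \<alpha> = Suc (length Hs)" "set \<alpha> \<subseteq> {..<n}"
    and b: "length \<beta> = Suc (length Hs)" "set \<beta> \<subseteq> {..<n}"
    and ij: "i < n" "j < n"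
  shows "Pm n 1 \<alpha> \<beta> Hs $$ (i,j) = emono n \<alpha> \<beta> Hs $$ (i,j)"
proof -
  have d: "i div n = 0" "j div n = 0" "i mod n = i" "j mod n = j" using ij by simp_all
  have ij': "i < 1*n" "j < 1*n" using ij by simp_all
  have "Pm n 1 \<alpha> \<beta> Hs $$ (i,j) = (\<Sum>ks\<in>paths 1 (length Hs) (i div n) (j div n).
       emono n \<alpha> \<beta> (blks n Hs ks) $$ (i mod n, j mod n))"
    by (rule Pm_entry[OF n _ a(1) b(1) a(2) b(2) ij']) (use Hs in simp)
  also have "\<dots> = emono n \<alpha> \<beta> (blks n Hs (replicate (Suc (length Hs)) 0)) $$ (i,j)"
    unfolding d paths_1 by simp
  also have "\<dots> = emono n \<alpha> \<beta> Hs $$ (i,j)"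
    unfolding blks_replicate[OF Hs] ..
  finally show ?thesis .
qed



lemma words_nth: "\<omega> \<in> words a l \<Longrightarrow> t < l \<Longrightarrow> \<omega> ! t < a"
  using words_props[of \<omega> a l] by (metis lessThan_iff nth_mem subsetD)

lemma key_value:
  assumes n: "0 < n"
    and a0: "\<alpha>0 \<in> words n (Suc l)" and b0: "\<beta>0 \<in> words n (Suc l)" and w0: "\<omega>0 \<in> words d l"
    and a: "\<alpha> \<in> words n (Suc l)" and b: "\<beta> \<in> words n (Suc l)" and w: "\<omega> \<in> words d l"
  shows "emono n \<alpha> \<beta> (HS (Xs0 n d \<alpha>0 \<beta>0 \<omega>0) \<omega>) $$ (\<alpha>0!0, \<beta>0!l) =
     (if \<omega> = \<omega>0 \<and> \<alpha> = \<alpha>0 \<and> \<beta> = \<beta>0 then 1 else 0)"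
proof -
  have la: "length \<alpha> = Suc l" "length \<alpha>0 = Suc l" "length \<beta> = Suc l" "length \<beta>0 = Suc l"
    "length \<omega> = l" "length \<omega>0 = l"
    using words_props[OF a] words_props[OF a0] words_props[OF b] words_props[OF b0]
      words_props[OF w] words_props[OF w0] by auto
  have ij: "\<alpha>0!0 < n" "\<beta>0!l < n" using words_nth[OF a0] words_nth[OF b0] by auto
  have hs: "HS (Xs0 n d \<alpha>0 \<beta>0 \<omega>0) \<omega> = map (\<lambda>t. if \<omega>!t = \<omega>0!t then Eunit n (\<beta>0!t) (\<alpha>0!Suc t) else 0\<^sub>m n n) [0..<l]"
    by (rule HS_Xs0[OF w w0])
  show ?thesis
  proof (cases "\<omega> = \<omega>0")
    case True
    define ps where "ps = map (\<lambda>t. (\<beta>0!t, \<alpha>0!Suc t)) [0..<l]"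
    have hs': "HS (Xs0 n d \<alpha>0 \<beta>0 \<omega>0) \<omega> = map (\<lambda>(a,b). Eunit n a b) ps"
      unfolding hs ps_def by (simp add: True)
    have lps: "length ps = l" unfolding ps_def by simp
    have psn: "\<forall>(a,b)\<in>set ps. a < n \<and> b < n"
      unfolding ps_def using words_nth[OF a0] words_nth[OF b0] by auto
    have "emono n \<alpha> \<beta> (HS (Xs0 n d \<alpha>0 \<beta>0 \<omega>0) \<omega>) $$ (\<alpha>0!0, \<beta>0!l) =
      (if \<alpha>0!0 = \<alpha>!0 \<and> \<beta>0!l = \<beta>!l \<and> (\<forall>t<l. \<beta>!t = \<beta>0!t \<and> \<alpha>!Suc t = \<alpha>0!Suc t) then 1 else 0)"
      unfolding hs' using emono_units[of \<alpha> ps \<beta> n "\<alpha>0!0" "\<beta>0!l"] la lps psn words_props[OF b] ij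
      by (simp add: ps_def)
    also have "(\<alpha>0!0 = \<alpha>!0 \<and> \<beta>0!l = \<beta>!l \<and> (\<forall>t<l. \<beta>!t = \<beta>0!t \<and> \<alpha>!Suc t = \<alpha>0!Suc t)) = (\<alpha> = \<alpha>0 \<and> \<beta> = \<beta>0)"
    proof
      assume H: "\<alpha>0!0 = \<alpha>!0 \<and> \<beta>0!l = \<beta>!l \<and> (\<forall>t<l. \<beta>!t = \<beta>0!t \<and> \<alpha>!Suc t = \<alpha>0!Suc t)"
      have "\<alpha> = \<alpha>0"
      proof (rule nth_equalityI)
        fix k assume "k < length \<alpha>"
        then show "\<alpha>!k = \<alpha>0!k" using H la by (cases k) auto
      qed (use la in simp)
      moreover have "\<beta> = \<beta>0"
      proof (rule nth_equalityI)
        fix k assume "k < length \<beta>"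
        then have "k < l \<or> k = l" using la by auto
        then show "\<beta>!k = \<beta>0!k" using H by auto
      qed (use la in simp)
      ultimately show "\<alpha> = \<alpha>0 \<and> \<beta> = \<beta>0" ..
    qed auto
    finally show ?thesis using True by simp
  next
    case False
    obtain t where t: "t < l" "\<omega>!t \<noteq> \<omega>0!t"
      using False la nth_equalityI[of \<omega> \<omega>0] by auto
    have z: "HS (Xs0 n d \<alpha>0 \<beta>0 \<omega>0) \<omega> ! t = 0\<^sub>m n n" unfolding hs using t by simp
    have c: "\<forall>G\<in>set (HS (Xs0 n d \<alpha>0 \<beta>0 \<omega>0) \<omega>). G \<in> carrier_mat n n" unfolding hs by auto
    have "emono n \<alpha> \<beta> (HS (Xs0 n d \<alpha>0 \<beta>0 \<omega>0) \<omega>) = 0\<^sub>m n n"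
      by (rule emono_zero[OF c _ _ _ z]) (use la t in \<open>simp_all add: hs\<close>)
    then show ?thesis using False ij by simp
  qed
qed

lemma Xs0_entry:
  assumes n: "0 < n" and cr: "coeff_rep d n fw hf"
    and a0: "\<alpha>0 \<in> words n (Suc l)" and b0: "\<beta>0 \<in> words n (Suc l)" and w0: "\<omega>0 \<in> words d l"
  shows "fl_amp d n fw 1 (Xs0 n d \<alpha>0 \<beta>0 \<omega>0) $$ (\<alpha>0!0, \<beta>0!l) = hf \<alpha>0 \<beta>0 \<omega>0"
proof -
  have ij: "\<alpha>0!0 < n" "\<beta>0!l < n" using words_nth[OF a0] words_nth[OF b0] by auto
  have ij': "\<alpha>0!0 < 1*n" "\<beta>0!l < 1*n" using ij by simp_all
  have l: "length (Xs0 n d \<alpha>0 \<beta>0 \<omega>0) = l" using words_props[OF w0] by simp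
  have "fl_amp d n fw 1 (Xs0 n d \<alpha>0 \<beta>0 \<omega>0) $$ (\<alpha>0!0, \<beta>0!l) =
     (\<Sum>\<omega>\<in>words d l. \<Sum>\<alpha>\<in>words n (Suc l). \<Sum>\<beta>\<in>words n (Suc l).
        hf \<alpha> \<beta> \<omega> * Pm n 1 \<alpha> \<beta> (HS (Xs0 n d \<alpha>0 \<beta>0 \<omega>0) \<omega>) $$ (\<alpha>0!0, \<beta>0!l))"
    using fl_entry[OF n cr Xs0_valid[OF a0 b0 w0] ij'] l by simp
  also have "\<dots> = (\<Sum>\<omega>\<in>words d l. \<Sum>\<alpha>\<in>words n (Suc l). \<Sum>\<beta>\<in>words n (Suc l).
        (\<lambda>k. if k = (\<omega>0,\<alpha>0,\<beta>0) then hf \<alpha>0 \<beta>0 \<omega>0 else 0) (\<omega>,\<alpha>,\<beta>))"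
  proof (intro sum.cong refl)
    fix \<omega> \<alpha> \<beta> assume w: "\<omega> \<in> words d l" and a: "\<alpha> \<in> words n (Suc l)" and b: "\<beta> \<in> words n (Suc l)"
    have la: "length \<alpha> = Suc l" "length \<beta> = Suc l" "set \<alpha> \<subseteq> {..<n}" "set \<beta> \<subseteq> {..<n}"
      using words_props[OF a] words_props[OF b] by auto
    have hs: "HS (Xs0 n d \<alpha>0 \<beta>0 \<omega>0) \<omega> = map (\<lambda>t. if \<omega>!t = \<omega>0!t then Eunit n (\<beta>0!t) (\<alpha>0!Suc t) else 0\<^sub>m n n) [0..<l]"
      by (rule HS_Xs0[OF w w0])
    have c: "\<forall>G\<in>set (HS (Xs0 n d \<alpha>0 \<beta>0 \<omega>0) \<omega>). G \<in> carrier_mat n n" unfolding hs by auto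
    have lh: "length (HS (Xs0 n d \<alpha>0 \<beta>0 \<omega>0) \<omega>) = l" unfolding hs by simp
    have "Pm n 1 \<alpha> \<beta> (HS (Xs0 n d \<alpha>0 \<beta>0 \<omega>0) \<omega>) $$ (\<alpha>0!0, \<beta>0!l) =
        emono n \<alpha> \<beta> (HS (Xs0 n d \<alpha>0 \<beta>0 \<omega>0) \<omega>) $$ (\<alpha>0!0, \<beta>0!l)"
      by (rule Pm1[OF n c _ la(3) _ la(4) ij]) (use la lh in simp_all)
    also have "\<dots> = (if \<omega> = \<omega>0 \<and> \<alpha> = \<alpha>0 \<and> \<beta> = \<beta>0 then 1 else 0)"
      by (rule key_value[OF n a0 b0 w0 a b w])
    finally show "hf \<alpha> \<beta> \<omega> * Pm n 1 \<alpha> \<beta> (HS (Xs0 n d \<alpha>0 \<beta>0 \<omega>0) \<omega>) $$ (\<alpha>0!0, \<beta>0!l) =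
        (\<lambda>k. if k = (\<omega>0,\<alpha>0,\<beta>0) then hf \<alpha>0 \<beta>0 \<omega>0 else 0) (\<omega>,\<alpha>,\<beta>)" by auto
  qed
  also have "\<dots> = (\<Sum>k\<in>words d l \<times> words n (Suc l) \<times> words n (Suc l). if k = (\<omega>0,\<alpha>0,\<beta>0) then hf \<alpha>0 \<beta>0 \<omega>0 else 0)"
    by (rule triple_sum)
  also have "\<dots> = hf \<alpha>0 \<beta>0 \<omega>0"
    using a0 b0 w0 by (simp add: finite_words)
  finally show ?thesis .
qed

lemma hf_le_cbnorm:
  assumes n: "0 < n" and cr: "coeff_rep d n fw hf"
    and a0: "\<alpha>0 \<in> words n (Suc l)" and b0: "\<beta>0 \<in> words n (Suc l)" and w0: "\<omega>0 \<in> words d l"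
  shows "cmod (hf \<alpha>0 \<beta>0 \<omega>0) \<le> cbnorm d n fw l"
proof -
  have ij: "\<alpha>0!0 < n" "\<beta>0!l < n" using words_nth[OF a0] words_nth[OF b0] by auto
  have l: "length (Xs0 n d \<alpha>0 \<beta>0 \<omega>0) = l" using words_props[OF w0] by simp
  have "cmod (hf \<alpha>0 \<beta>0 \<omega>0) = cmod (fl_amp d n fw 1 (Xs0 n d \<alpha>0 \<beta>0 \<omega>0) $$ (\<alpha>0!0, \<beta>0!l))"
    using Xs0_entry[OF n cr a0 b0 w0] by simp
  also have "\<dots> \<le> opnorm (fl_amp d n fw 1 (Xs0 n d \<alpha>0 \<beta>0 \<omega>0))"
  proof (rule entry_le_opnorm)
    have fc: "fl_amp d n fw 1 (Xs0 n d \<alpha>0 \<beta>0 \<omega>0) \<in> carrier_mat (1*n) (1*n)" by (rule fl_carrier)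
    show "\<alpha>0!0 < dim_row (fl_amp d n fw 1 (Xs0 n d \<alpha>0 \<beta>0 \<omega>0))"
      "\<beta>0!l < dim_col (fl_amp d n fw 1 (Xs0 n d \<alpha>0 \<beta>0 \<omega>0))"
      using ij carrier_matD[OF fc] by simp_all
  qed
  also have "\<dots> \<le> cbnorm d n fw l"
    using le_cbnorm[OF n cr Xs0_valid[OF a0 b0 w0]] l by simp
  finally show ?thesis .
qed



lemma card_words: "card (words a l) = a ^ l"
proof -
  have "words a l = {xs. set xs \<subseteq> {..<a} \<and> length xs = l}" unfolding words_def by auto
  then show ?thesis using card_lists_length_eq[of "{..<a}" l] by simp
qed

lemma final_arith:
  fixes S c :: real and n d l :: nat
  assumes n: "n \<ge> 1" and l: "l \<ge> 1" and c: "c \<ge> 0" and S0: "S \<ge> 0"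
    and S: "S \<le> real (n ^ Suc l) * (real (n ^ Suc l) * (real (d ^ l) * c\<^sup>2))"
  shows "S powr (1 / (2 * real l)) \<le> (real n ^ 4 * (real d + 1)) * c powr (1 / real l)"
proof -
  define r where "r = 1 / (2 * real l)"
  define N where "N = real n ^ (2*l+2) * real d ^ l"
  define M where "M = real n ^ 4 * (real d + 1)"
  have r0: "r \<ge> 0" unfolding r_def by simp
  have N0: "N \<ge> 0" unfolding N_def by simp
  have "(1::real) \<le> real n ^ 4" using n by simp
  then have "1 * 1 \<le> real n ^ 4 * (real d + 1)" by (intro mult_mono) auto
  then have M1: "M \<ge> 1" unfolding M_def by simp
  have e1: "2*l+2 = Suc l + Suc l" by simp
  have e2: "real n ^ (2*l+2) = real n ^ Suc l * real n ^ Suc l" unfolding e1 by (rule power_add)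
  have "real (n ^ Suc l) * (real (n ^ Suc l) * (real (d ^ l) * c\<^sup>2)) = N * c\<^sup>2"
    unfolding N_def e2 of_nat_power by (simp add: mult_ac)
  then have SN: "S \<le> N * c\<^sup>2" using S by (simp only:)
  have "S powr r \<le> (N * c\<^sup>2) powr r" by (rule powr_mono2[OF r0 S0 SN])
  also have "\<dots> = N powr r * (c\<^sup>2) powr r" by (rule powr_mult)
  also have "(c\<^sup>2) powr r = c powr (1 / real l)"
  proof (cases "c = 0")
    case True then show ?thesis by simp
  next
    case False
    then have cp: "c > 0" using c by simp
    have "c\<^sup>2 = c powr (real 2)" using powr_realpow[OF cp, of 2] by simp
    then have "(c\<^sup>2) powr r = c powr (2 * r)" by (simp add: powr_powr)
    also have "2 * r = 1 / real l" unfolding r_def by simp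
    finally show ?thesis .
  qed
  also have "N powr r \<le> M"
  proof -
    have "real n ^ (2*l+2) \<le> real n ^ (4*l)"
      by (rule power_increasing) (use n l in auto)
    moreover have "real d ^ l \<le> (real d + 1) ^ l" by (rule power_mono) auto
    ultimately have "N \<le> real n ^ (4*l) * (real d + 1) ^ l"
      unfolding N_def by (intro mult_mono) auto
    also have "\<dots> = M ^ l" unfolding M_def by (simp add: power_mult power_mult_distrib)
    finally have NM: "N \<le> M ^ l" .
    have "N powr r \<le> (M ^ l) powr r" by (rule powr_mono2[OF r0 N0 NM])
    also have "\<dots> = M powr (real l * r)"
    proof -
      have "M ^ l = M powr real l" using powr_realpow[of M l] M1 by simp
      then show ?thesis by (simp add: powr_powr)
    qed
    also have "real l * r = 1 / 2" unfolding r_def using l by simp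
    also have "M powr (1/2) \<le> M powr 1" by (rule powr_mono) (use M1 in auto)
    also have "\<dots> = M" using M1 by simp
    finally show ?thesis .
  qed
  then have "N powr r * c powr (1 / real l) \<le> M * c powr (1 / real l)"
    by (rule mult_right_mono) simp
  finally show ?thesis unfolding r_def M_def .
qed

theorem mainTheorem11:
  fixes d n :: nat and Y :: "complex mat list"
    and \<Omega> :: "(nat \<times> complex mat list) set"
    and f :: "nat \<Rightarrow> complex mat list \<Rightarrow> complex mat"
    and fw :: "nat list \<Rightarrow> complex mat list \<Rightarrow> complex mat"
    and hf :: "nat list \<Rightarrow> nat list \<Rightarrow> nat list \<Rightarrow> complex"
  assumes "(n, Y) \<in> NCspace d"
    and "uniformly_analytic d \<Omega> f"
    and "(n, Y) \<in> \<Omega>"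
    and "taylor_taylor d n Y \<Omega> f fw"
    and "coeff_rep d n fw hf"
  shows "\<exists>C>0. \<forall>l::nat. l \<ge> 1 \<longrightarrow>
    (\<Sum>\<alpha>\<in>words n (Suc l). \<Sum>\<beta>\<in>words n (Suc l). \<Sum>\<omega>\<in>words d l. (cmod (hf \<alpha> \<beta> \<omega>))\<^sup>2)
        powr (1 / (2 * real l))
      \<le> C * cbnorm d n fw l powr (1 / real l)"
proof -
  have n1: "n \<ge> 1" using assms(1) unfolding NCspace_def by simp
  then have n: "0 < n" by simp
  have cr: "coeff_rep d n fw hf" by (rule assms(5))
  define C where "C = real n ^ 4 * (real d + 1)"
  have C0: "C > 0" unfolding C_def using n by simp
  show ?thesis
  proof (intro exI[of _ C] conjI allI impI C0)
    fix l :: nat assume l: "l \<ge> 1"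
    define S where "S = (\<Sum>\<alpha>\<in>words n (Suc l). \<Sum>\<beta>\<in>words n (Suc l). \<Sum>\<omega>\<in>words d l. (cmod (hf \<alpha> \<beta> \<omega>))\<^sup>2)"
    define c where "c = cbnorm d n fw l"
    have S0: "S \<ge> 0" unfolding S_def by (intro sum_nonneg) simp
    show "S powr (1 / (2 * real l)) \<le> C * c powr (1 / real l)"
    proof (cases "d = 0")
      case True
      have "words d l = {}" using True l unfolding words_def by auto
      then have "S = 0" unfolding S_def by simp
      then show ?thesis using C0 by simp
    next
      case False
      have a0: "replicate (Suc l) 0 \<in> words n (Suc l)" unfolding words_def using n by auto
      have w0: "replicate l 0 \<in> words d l" unfolding words_def using False by auto
      have c0: "c \<ge> 0" unfolding c_def
        using hf_le_cbnorm[OF n cr a0 a0 w0] norm_ge_zero order_trans by blast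
      have tm: "(cmod (hf \<alpha> \<beta> \<omega>))\<^sup>2 \<le> c\<^sup>2" if "\<alpha> \<in> words n (Suc l)" "\<beta> \<in> words n (Suc l)" "\<omega> \<in> words d l" for \<alpha> \<beta> \<omega>
        unfolding c_def by (rule power_mono[OF hf_le_cbnorm[OF n cr that]]) simp
      have "S \<le> real (card (words n (Suc l))) * (real (card (words n (Suc l))) * (real (card (words d l)) * c\<^sup>2))"
        unfolding S_def
        by (intro sum_bounded_above[of _ _ "real (card (words n (Suc l))) * (real (card (words d l)) * c\<^sup>2)", simplified]
                  sum_bounded_above[of _ _ "real (card (words d l)) * c\<^sup>2", simplified]
                  sum_bounded_above[of _ _ "c\<^sup>2", simplified] tm) 
      then have "S \<le> real (n ^ Suc l) * (real (n ^ Suc l) * (real (d ^ l) * c\<^sup>2))"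
        by (simp only: card_words)
      then show ?thesis unfolding C_def by (rule final_arith[OF n1 l c0 S0])
    qed
  qed
qed

end
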